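(* Let $\mathcal{O}$, $\Psi$, $k$ and $\gamma^*=\min\{1+2\gamma_{\max,n},(1+2\gamma(\Psi))^k\}$ be as follows: $\mathcal{O}$ is a nonempty set of quantum channels on $n$ qubits closed under composition, $\Psi$ is a channel on $n$ qubits with $\gamma(\Psi)<\infty$, $k\ge0$ an integer. Let $D$ be any probability distribution on $\mathbb{F}_2^n\times\mathbb{F}_2^n$ and $\delta\in(0,1)$. Then with probability at least $1-\delta$ over $S=(z_1,\ldots,z_m)\sim D^m$, simultaneously for all $\Phi\in\mathcal{O}^{(k)}_\Psi$, \[ er_D(\Phi)\le er_S(\Phi)+2\gamma^*\hat{R}_S(\mathcal{F}(\mathcal{O}))+3\sqrt{\frac{\log(2/\delta)}{2m}}. \]
   Context: A quantum channel on $n$ qubits is a completely positive trace-preserving linear map on $2^n\times2^n$ complex matrices. For a channel $\Phi$, $f_\Phi(x,y)=\mathrm{Tr}[\Phi(|x\rangle\langle x|)\,|y\rangle\langle y|]$ for $x,y\in\mathbb{F}_2^n$; $\mathcal{F}(\Omega)=\{f_\Phi:\Phi\in\Omega\}$. Empirical Rademacher complexity: $\hat{R}_S(\mathcal{G})=\mathbb{E}_{\epsilon}[\sup_{g\in\mathcal{G}}\frac1m\sum_i\epsilon_i g(z_i)]$, $\epsilon_i$ i.i.d. uniform on $\{\pm1\}$. Free robustness w.r.t. $\mathcal{O}$: $\gamma(\Phi)=\inf\{\lambda\ge0:\exists\,\Phi'\in\mathrm{Conv}(\mathcal{O}),\ (\Phi+\lambda\Phi')/(1+\lambda)\in\mathrm{Conv}(\mathcal{O})\}$;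 $\gamma_{\max,n}=\sup$ of $\gamma(\Phi)$ over all channels on $n$ qubits. $\mathcal{O}^{(k)}_\Psi$ is the set of all finite compositions of elements of $\mathcal{O}\cup\{\Psi\}$ in which $\Psi$ appears at most $k$ times. Loss: $l(z,\Phi)=1-f_\Phi(z)$; expected error $er_D(\Phi)=\mathbb{E}_{z\sim D}\,l(z,\Phi)$; empirical error $er_S(\Phi)=\frac1m\sum_{i=1}^m l(z_i,\Phi)$. *)

theory Defs
  imports "HOL-Probability.Probability" "Jordan_Normal_Form.Matrix" "Jordan_Normal_Form.Conjugate"
begin

text \<open>Dimension of the Hilbert space of n qubits; the computational basis
  vectors |x> for x in F_2^n are indexed by the naturals x < 2^n.\<close>
definition qdim :: "nat \<Rightarrow> nat" where
  "qdim n = 2 ^ n"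

definition mtrace :: "complex mat \<Rightarrow> complex" where
  "mtrace A = (\<Sum>i<dim_row A. A $$ (i, i))"

definition psd :: "nat \<Rightarrow> complex mat \<Rightarrow> bool" where
  "psd d A \<longleftrightarrow> A \<in> carrier_mat d d \<and>
     (\<forall>v \<in> carrier_vec d. Im (Matrix.scalar_prod (conjugate v) (mult_mat_vec A v)) = 0 \<and> Re (Matrix.scalar_prod (conjugate v) (mult_mat_vec A v)) \<ge> 0)"

definition block :: "nat \<Rightarrow> complex mat \<Rightarrow> nat \<Rightarrow> nat \<Rightarrow> complex mat" where
  "block d X a b = mat d d (\<lambda>(r, s). X $$ (a * d + r, b * d + s))"

definition id_tensor :: "nat \<Rightarrow> nat \<Rightarrow> (complex mat \<Rightarrow> complex mat) \<Rightarrow> complex mat \<Rightarrow> complex mat" where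
  "id_tensor m d \<Phi> X = mat (m * d) (m * d)
     (\<lambda>(i, j). \<Phi> (block d X (i div d) (j div d)) $$ (i mod d, j mod d))"

definition linear_map_on :: "nat \<Rightarrow> (complex mat \<Rightarrow> complex mat) \<Rightarrow> bool" where
  "linear_map_on d \<Phi> \<longleftrightarrow>
     (\<forall>X \<in> carrier_mat d d. \<forall>Y \<in> carrier_mat d d. \<forall>c::complex.
        \<Phi> (c \<cdot>\<^sub>m X + Y) = c \<cdot>\<^sub>m \<Phi> X + \<Phi> Y)"

definition completely_positive :: "nat \<Rightarrow> (complex mat \<Rightarrow> complex mat) \<Rightarrow> bool" where
  "completely_positive d \<Phi> \<longleftrightarrow>
     (\<forall>m \<ge> 1. \<forall>X. psd (m * d) X \<longrightarrow> psd (m * d) (id_tensor m d \<Phi> X))"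

definition trace_preserving :: "nat \<Rightarrow> (complex mat \<Rightarrow> complex mat) \<Rightarrow> bool" where
  "trace_preserving d \<Phi> \<longleftrightarrow> (\<forall>X \<in> carrier_mat d d. mtrace (\<Phi> X) = mtrace X)"

text \<open>To have a unique HOL representative for each channel, it is required to
  send all matrices of wrong dimension to the zero matrix.\<close>
definition channel :: "nat \<Rightarrow> (complex mat \<Rightarrow> complex mat) \<Rightarrow> bool" where
  "channel n \<Phi> \<longleftrightarrow>
     (\<forall>X \<in> carrier_mat (qdim n) (qdim n). \<Phi> X \<in> carrier_mat (qdim n) (qdim n)) \<and>
     (\<forall>X. X \<notin> carrier_mat (qdim n) (qdim n) \<longrightarrow> \<Phi> X = 0\<^sub>m (qdim n) (qdim n)) \<and>
     linear_map_on (qdim n) \<Phi> \<and>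
     completely_positive (qdim n) \<Phi> \<and>
     trace_preserving (qdim n) \<Phi>"

definition in_conv :: "nat \<Rightarrow> (complex mat \<Rightarrow> complex mat) set \<Rightarrow> (complex mat \<Rightarrow> complex mat) \<Rightarrow> bool" where
  "in_conv n Ofr F \<longleftrightarrow>
     (\<exists>(N::nat) (w::nat \<Rightarrow> real) (G::nat \<Rightarrow> (complex mat \<Rightarrow> complex mat)).
        (\<forall>i<N. G i \<in> Ofr \<and> w i \<ge> 0) \<and> (\<Sum>i<N. w i) = 1 \<and>
        (\<forall>X \<in> carrier_mat (qdim n) (qdim n).
           F X = mat (qdim n) (qdim n) (\<lambda>(r, c). \<Sum>i<N. complex_of_real (w i) * (G i X $$ (r, c)))))"

definition mix :: "nat \<Rightarrow> (complex mat \<Rightarrow> complex mat) \<Rightarrow> real \<Rightarrow> (complex mat \<Rightarrow> complex mat) \<Rightarrow> (complex mat \<Rightarrow> complex mat)" where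
  "mix n \<Phi> l \<Phi>' = (\<lambda>X. mat (qdim n) (qdim n)
      (\<lambda>(r, c). (\<Phi> X $$ (r, c) + complex_of_real l * \<Phi>' X $$ (r, c)) / complex_of_real (1 + l)))"

text \<open>Free robustness \<gamma>(\<Phi>) w.r.t. Ofr (value \<infinity> if no admissible \<lambda> exists).\<close>
definition robustness :: "nat \<Rightarrow> (complex mat \<Rightarrow> complex mat) set \<Rightarrow> (complex mat \<Rightarrow> complex mat) \<Rightarrow> ereal" where
  "robustness n Ofr \<Phi> = Inf {ereal l | l. l \<ge> 0 \<and>
      (\<exists>\<Phi>'. in_conv n Ofr \<Phi>' \<and> in_conv n Ofr (mix n \<Phi> l \<Phi>'))}"

definition gamma_max :: "nat \<Rightarrow> (complex mat \<Rightarrow> complex mat) set \<Rightarrow> ereal" where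
  "gamma_max n Ofr = Sup {robustness n Ofr \<Phi> | \<Phi>. channel n \<Phi>}"

definition gamma_star :: "nat \<Rightarrow> (complex mat \<Rightarrow> complex mat) set \<Rightarrow> (complex mat \<Rightarrow> complex mat) \<Rightarrow> nat \<Rightarrow> ereal" where
  "gamma_star n Ofr \<Psi> k = min (1 + 2 * gamma_max n Ofr) ((1 + 2 * robustness n Ofr \<Psi>) ^ k)"

definition closed_under_comp :: "('a \<Rightarrow> 'a) set \<Rightarrow> bool" where
  "closed_under_comp Ofr \<longleftrightarrow> (\<forall>F \<in> Ofr. \<forall>G \<in> Ofr. F \<circ> G \<in> Ofr)"

definition comps_k :: "('a \<Rightarrow> 'a) set \<Rightarrow> ('a \<Rightarrow> 'a) \<Rightarrow> nat \<Rightarrow> ('a \<Rightarrow> 'a) set" where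
  "comps_k Ofr \<Psi> k = {foldr (\<circ>) Ls id | Ls. Ls \<noteq> [] \<and> set Ls \<subseteq> Ofr \<union> {\<Psi>} \<and>
       length (filter (\<lambda>G. G = \<Psi>) Ls) \<le> k}"

definition basis_proj :: "nat \<Rightarrow> nat \<Rightarrow> complex mat" where
  "basis_proj n x = mat (qdim n) (qdim n) (\<lambda>(i, j). if i = x \<and> j = x then 1 else 0)"

definition f_chan :: "nat \<Rightarrow> (complex mat \<Rightarrow> complex mat) \<Rightarrow> nat \<times> nat \<Rightarrow> real" where
  "f_chan n \<Phi> z = Re (mtrace (\<Phi> (basis_proj n (fst z)) * basis_proj n (snd z)))"

definition fclass :: "nat \<Rightarrow> (complex mat \<Rightarrow> complex mat) set \<Rightarrow> (nat \<times> nat \<Rightarrow> real) set" where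
  "fclass n Ofr = {f_chan n \<Phi> | \<Phi>. \<Phi> \<in> Ofr}"

definition sign_vectors :: "nat \<Rightarrow> real list set" where
  "sign_vectors m = {\<sigma>. length \<sigma> = m \<and> set \<sigma> \<subseteq> {-1, 1}}"

text \<open>Empirical Rademacher complexity; the expectation over uniform \<epsilon> \<in> {\<plusminus>1}^m is the
  average over all 2^m sign vectors.\<close>
definition emp_rademacher :: "('z \<Rightarrow> real) set \<Rightarrow> 'z list \<Rightarrow> real" where
  "emp_rademacher G S =
     (\<Sum>\<sigma> \<in> sign_vectors (length S).
        Sup {(\<Sum>i<length S. \<sigma> ! i * g (S ! i)) / real (length S) | g. g \<in> G})
     / 2 ^ length S"

definition loss :: "nat \<Rightarrow> nat \<times> nat \<Rightarrow> (complex mat \<Rightarrow> complex mat) \<Rightarrow> real" where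
  "loss n z \<Phi> = 1 - f_chan n \<Phi> z"

definition er_D :: "nat \<Rightarrow> (nat \<times> nat) pmf \<Rightarrow> (complex mat \<Rightarrow> complex mat) \<Rightarrow> real" where
  "er_D n D \<Phi> = measure_pmf.expectation D (\<lambda>z. loss n z \<Phi>)"

definition er_S :: "nat \<Rightarrow> (nat \<times> nat) list \<Rightarrow> (complex mat \<Rightarrow> complex mat) \<Rightarrow> real" where
  "er_S n S \<Phi> = (\<Sum>i<length S. loss n (S ! i) \<Phi>) / real (length S)"

fun iid_sample :: "'a pmf \<Rightarrow> nat \<Rightarrow> 'a list pmf" where
  "iid_sample D 0 = return_pmf []"
| "iid_sample D (Suc m) = bind_pmf D (\<lambda>z. map_pmf (\<lambda>zs. z # zs) (iid_sample D m))"

end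

theory Submission
  imports Defs
begin


abbreviation EE :: "'a pmf \<Rightarrow> ('a \<Rightarrow> real) \<Rightarrow> real" where
  "EE M f \<equiv> measure_pmf.expectation M f"

lemma iid_sample_set: "set_pmf (iid_sample D m) \<subseteq> {xs. length xs = m \<and> set xs \<subseteq> set_pmf D}"
  by (induction m) fastforce+

lemma finite_iid: "finite (set_pmf D) \<Longrightarrow> finite (set_pmf (iid_sample D m))"
  by (rule finite_subset[of _ "{xs. set xs \<subseteq> set_pmf D \<and> length xs = m}"])
     (use iid_sample_set in \<open>auto intro: finite_lists_length_eq\<close>)

lemma EE_fin: "finite (set_pmf M) \<Longrightarrow> EE M f = (\<Sum>x\<in>set_pmf M. f x * pmf M x)"
  by (rule integral_measure_pmf_real) auto

lemma EE_bind_fin: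
  assumes fM: "finite (set_pmf M)" and fN: "\<And>x. x \<in> set_pmf M \<Longrightarrow> finite (set_pmf (N x))"
  shows "EE (bind_pmf M N) f = EE M (\<lambda>x. EE (N x) f)"
proof -
  define B where "B = (\<Union>x\<in>set_pmf M. set_pmf (N x))"
  have fB: "finite B" unfolding B_def by (rule finite_UN_I[OF fM fN])
  have "EE (bind_pmf M N) f = (\<Sum>y\<in>B. f y * pmf (bind_pmf M N) y)"
    by (rule integral_measure_pmf_real[OF fB]) (auto simp: B_def)
  also have "\<dots> = (\<Sum>y\<in>B. f y * (\<Sum>x\<in>set_pmf M. pmf (N x) y * pmf M x))"
    by (intro sum.cong refl) (simp add: pmf_bind EE_fin[OF fM])
  also have "\<dots> = (\<Sum>x\<in>set_pmf M. (\<Sum>y\<in>B. f y * pmf (N x) y) * pmf M x)"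
    by (simp add: sum_distrib_left sum_distrib_right mult.assoc sum.swap[of _ B])
  also have "\<dots> = (\<Sum>x\<in>set_pmf M. EE (N x) f * pmf M x)"
  proof (intro sum.cong refl)
    fix x assume x: "x \<in> set_pmf M"
    have "EE (N x) f = (\<Sum>y\<in>B. f y * pmf (N x) y)"
      by (rule integral_measure_pmf_real) (use x fB in \<open>auto simp: B_def\<close>)
    then show "(\<Sum>y\<in>B. f y * pmf (N x) y) * pmf M x = EE (N x) f * pmf M x" by simp
  qed
  also have "\<dots> = EE M (\<lambda>x. EE (N x) f)" by (simp add: EE_fin[OF fM])
  finally show ?thesis .
qed

lemma EE_swap:
  assumes "finite (set_pmf A)" "finite (set_pmf B)"
  shows "EE A (\<lambda>x. EE B (\<lambda>y. h x y)) = EE B (\<lambda>y. EE A (\<lambda>x. h x y))"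
  using assms apply (simp add: EE_fin sum_distrib_right)
  apply (subst sum.swap)
  apply (simp add: mult_ac)
  done

lemma EE_iid_Suc:
  assumes "finite (set_pmf D)"
  shows "EE (iid_sample D (Suc m)) f = EE D (\<lambda>z. EE (iid_sample D m) (\<lambda>xs. f (z # xs)))"
  using assms by (simp add: EE_bind_fin finite_iid)

lemma iid_nth: "i < m \<Longrightarrow> map_pmf (\<lambda>xs. xs ! i) (iid_sample D m) = D"
proof (induction m arbitrary: i)
  case 0 then show ?case by simp
next
  case (Suc m)
  show ?case
  proof (cases i)
    case 0 then show ?thesis
      by (simp add: map_bind_pmf pmf.map_comp o_def map_pmf_const bind_return_pmf')
  next
    case (Suc j)
    with Suc.prems have "j < m" by simp
    from Suc.IH[OF this] Suc show ?thesis
      by (simp add: map_bind_pmf pmf.map_comp o_def)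
  qed
qed

lemma EE_iid_nth: "i < m \<Longrightarrow> EE (iid_sample D m) (\<lambda>xs. g (xs ! i)) = EE D g"
  using iid_nth[of i m D] by (metis integral_map_pmf)

lemma integrable_fin[intro, simp]: "finite (set_pmf M) \<Longrightarrow> integrable (measure_pmf M) (f :: _ \<Rightarrow> real)"
  by (rule integrable_measure_pmf_finite)

definition bdd_diff :: "'a pmf \<Rightarrow> nat \<Rightarrow> real \<Rightarrow> ('a list \<Rightarrow> real) \<Rightarrow> bool" where
 "bdd_diff D m c f \<longleftrightarrow> (\<forall>xs ys i. length xs = m \<longrightarrow> length ys = m \<longrightarrow> set xs \<subseteq> set_pmf D \<longrightarrow>
     set ys \<subseteq> set_pmf D \<longrightarrow> i < m \<longrightarrow> (\<forall>j<m. j \<noteq> i \<longrightarrow> xs!j = ys!j) \<longrightarrow> f xs - f ys \<le> c)"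

lemma bdd_diff_Cons:
  assumes "bdd_diff D (Suc m) c f" "z \<in> set_pmf D"
  shows "bdd_diff D m c (\<lambda>xs. f (z # xs))"
  unfolding bdd_diff_def
proof (intro allI impI)
  fix xs ys i
  assume h: "length xs = m" "length ys = m" "set xs \<subseteq> set_pmf D" "set ys \<subseteq> set_pmf D" "i < m"
    "\<forall>j<m. j \<noteq> i \<longrightarrow> xs ! j = ys ! j"
  have "\<forall>j<Suc m. j \<noteq> Suc i \<longrightarrow> (z#xs) ! j = (z#ys) ! j"
    using h(6) by (auto simp: less_Suc_eq_0_disj)
  then show "f (z # xs) - f (z # ys) \<le> c"
    using assms(1) h assms(2) unfolding bdd_diff_def
    by (metis Suc_less_eq insert_subset length_Cons list.simps(15))
qed

lemma mgf_bound:
  assumes fin: "finite (set_pmf D)" and l: "l > 0"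
  shows "bdd_diff D m c f \<Longrightarrow>
    EE (iid_sample D m) (\<lambda>xs. exp (l * (f xs - EE (iid_sample D m) f))) \<le> exp (l^2 * (real m * c^2) / 8)"
proof (induction m arbitrary: f)
  case 0 then show ?case by simp
next
  case (Suc m)
  define I where "I = iid_sample D m"
  have fI: "finite (set_pmf I)" using fin finite_iid I_def by blast
  define g where "g z = EE I (\<lambda>xs. f (z # xs))" for z
  have Ef: "EE (iid_sample D (Suc m)) f = EE D g" unfolding g_def I_def by (rule EE_iid_Suc[OF fin])
  have IH: "EE I (\<lambda>xs. exp (l * (f (z#xs) - g z))) \<le> exp (l^2 * (real m * c^2) / 8)"
    if "z \<in> set_pmf D" for z
    using Suc.IH[OF bdd_diff_Cons[OF Suc.prems that]] by (simp add: g_def I_def)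
  have gdiff: "g z - g z' \<le> c" if "z \<in> set_pmf D" "z' \<in> set_pmf D" for z z'
  proof -
    have "g z - g z' = EE I (\<lambda>xs. f (z#xs) - f (z'#xs))" by (simp add: g_def fI)
    also have "\<dots> \<le> EE I (\<lambda>xs. c)"
    proof (rule integral_mono_AE)
      show "AE x in measure_pmf I. f (z # x) - f (z' # x) \<le> c"
        unfolding AE_measure_pmf_iff
      proof
        fix xs assume "xs \<in> set_pmf I"
        then have xs: "length xs = m" "set xs \<subseteq> set_pmf D" using iid_sample_set I_def by blast+
        have "\<forall>j<Suc m. j \<noteq> 0 \<longrightarrow> (z#xs) ! j = (z'#xs) ! j" by (auto simp: less_Suc_eq_0_disj)
        then show "f (z # xs) - f (z' # xs) \<le> c"
          using Suc.prems xs that unfolding bdd_diff_def by (metis insert_subset length_Cons list.simps(15) zero_less_Suc)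
      qed
    qed (use fI in auto)
    also have "\<dots> = c" by simp
    finally show ?thesis .
  qed
  have ne: "set_pmf D \<noteq> {}" by (rule set_pmf_not_empty)
  define a where "a = Min (g ` set_pmf D)"
  have gin: "g z \<in> {a..a+c}" if "z \<in> set_pmf D" for z
  proof -
    have "a \<in> g ` set_pmf D" unfolding a_def using fin ne by (intro Min_in) auto
    then obtain z0 where z0: "z0 \<in> set_pmf D" "a = g z0" by auto
    have "a \<le> g z" unfolding a_def using fin that by (intro Min_le) auto
    moreover have "g z \<le> a + c" using gdiff[OF that z0(1)] z0 by simp
    ultimately show ?thesis by simp
  qed
  interpret hb: interval_bounded_random_variable "measure_pmf D" g a "a+c"
    by unfold_locales (auto simp: AE_measure_pmf_iff dest: gin)
  have H: "EE D (\<lambda>z. exp (l * (g z - EE D g))) \<le> exp (l^2 * c^2 / 8)"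
  proof -
    have "ennreal (EE D (\<lambda>z. exp (l * (g z - EE D g)))) = (\<integral>\<^sup>+z. exp (l * (g z - EE D g)) \<partial>measure_pmf D)"
      by (rule nn_integral_eq_integral[symmetric]) (use fin in auto)
    also have "\<dots> \<le> ennreal (exp (l^2 * (a + c - a)^2 / 8))"
      by (rule hb.Hoeffdings_lemma_nn_integral[OF l])
    finally show ?thesis by (simp add: ennreal_le_iff)
  qed
  define K where "K = exp (l^2 * (real m * c^2) / 8)"
  have "EE (iid_sample D (Suc m)) (\<lambda>xs. exp (l * (f xs - EE (iid_sample D (Suc m)) f)))
      = EE D (\<lambda>z. EE I (\<lambda>xs. exp (l * (f (z#xs) - EE D g))))"
    by (simp only: Ef) (simp only: EE_iid_Suc[OF fin] I_def)
  also have "\<dots> = EE D (\<lambda>z. exp (l * (g z - EE D g)) * EE I (\<lambda>xs. exp (l * (f (z#xs) - g z))))"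
  proof (intro Bochner_Integration.integral_cong refl)
    fix z
    have "(\<lambda>xs. exp (l * (f (z#xs) - EE D g))) = (\<lambda>xs. exp (l * (g z - EE D g)) * exp (l * (f (z#xs) - g z)))"
      by (auto simp: exp_add[symmetric] algebra_simps)
    then show "EE I (\<lambda>xs. exp (l * (f (z#xs) - EE D g))) = exp (l * (g z - EE D g)) * EE I (\<lambda>xs. exp (l * (f (z#xs) - g z)))"
      by simp
  qed
  also have "\<dots> \<le> EE D (\<lambda>z. exp (l * (g z - EE D g)) * K)"
  proof (rule integral_mono_AE)
    show "AE z in measure_pmf D. exp (l * (g z - EE D g)) * EE I (\<lambda>xs. exp (l * (f (z#xs) - g z))) \<le> exp (l * (g z - EE D g)) * K"
      unfolding AE_measure_pmf_iff using IH by (auto simp: K_def intro: mult_left_mono)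
  qed (use fin in auto)
  also have "\<dots> = EE D (\<lambda>z. exp (l * (g z - EE D g))) * K" by simp
  also have "\<dots> \<le> exp (l^2 * c^2 / 8) * K" by (rule mult_right_mono[OF H]) (simp add: K_def)
  also have "\<dots> = exp (l^2 * (real (Suc m) * c^2) / 8)"
    by (simp add: K_def exp_add[symmetric] algebra_simps add_divide_distrib)
  finally show ?case .
qed

lemma mcdiarmid:
  assumes fin: "finite (set_pmf D)" and m: "m > 0" and c: "c > 0" and t: "t > 0"
    and bd: "bdd_diff D m c f"
  shows "measure_pmf.prob (iid_sample D m) {xs. f xs - EE (iid_sample D m) f \<ge> t}
           \<le> exp (-2 * t^2 / (real m * c^2))"
proof -
  define M where "M = iid_sample D m"
  have fM: "finite (set_pmf M)" using fin finite_iid M_def by blast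
  define l where "l = 4 * t / (real m * c^2)"
  have l: "l > 0" using m c t by (simp add: l_def)
  have eq: "{xs. f xs - EE M f \<ge> t} = {xs \<in> space (measure_pmf M). exp (l * (f xs - EE M f)) \<ge> exp (l*t)}"
    using l by auto
  have "measure_pmf.prob M {xs. f xs - EE M f \<ge> t} \<le> EE M (\<lambda>xs. exp (l * (f xs - EE M f))) / exp (l*t)"
    unfolding eq by (rule integral_Markov_inequality_measure) (use fM in auto)
  also have "\<dots> \<le> exp (l^2 * (real m * c^2) / 8) / exp (l*t)"
    by (rule divide_right_mono) (use mgf_bound[OF fin l bd] M_def in auto)
  also have "\<dots> = exp (l^2 * (real m * c^2) / 8 - l * t)" by (simp add: exp_diff)
  also have "l^2 * (real m * c^2) / 8 - l * t = -2 * t^2 / (real m * c^2)"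
    using m c by (simp add: l_def field_simps power2_eq_square)
  finally show ?thesis by (simp add: M_def)
qed


lemma sign_vectors_alt: "sign_vectors m = {xs. set xs \<subseteq> {-1, 1::real} \<and> length xs = m}"
  by (auto simp: sign_vectors_def)

lemma sign_vectors_finite: "finite (sign_vectors m)"
  unfolding sign_vectors_alt by (rule finite_lists_length_eq) simp

lemma sign_vectors_card: "card (sign_vectors m) = 2 ^ m"
  unfolding sign_vectors_alt by (subst card_lists_length_eq) (auto simp: numeral_2_eq_2)

lemma sign_nth: "\<sigma> \<in> sign_vectors m \<Longrightarrow> i < m \<Longrightarrow> \<sigma> ! i = 1 \<or> \<sigma> ! i = -1"
proof -
  assume a: "\<sigma> \<in> sign_vectors m" "i < m"
  then have "\<sigma> ! i \<in> set \<sigma>" by (simp add: sign_vectors_def)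
  with a have "\<sigma> ! i \<in> {-1, 1}" unfolding sign_vectors_def by blast
  then show ?thesis by auto
qed

lemma sign_abs: "\<sigma> \<in> sign_vectors m \<Longrightarrow> i < m \<Longrightarrow> \<bar>\<sigma> ! i\<bar> = 1"
  using sign_nth[of \<sigma> m i] by auto

lemma sign_neg_mem: "\<sigma> \<in> sign_vectors m \<Longrightarrow> map uminus \<sigma> \<in> sign_vectors m"
  unfolding sign_vectors_def by auto

lemma sum_sign_neg: "(\<Sum>\<sigma>\<in>sign_vectors m. h (map uminus \<sigma>)) = (\<Sum>\<sigma>\<in>sign_vectors m. h \<sigma>)"
  by (rule sum.reindex_bij_witness[of _ "map uminus" "map uminus"])
     (auto simp: sign_neg_mem o_def)

lemma bdd_Sup_upper:
  fixes u :: "'b \<Rightarrow> real"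
  shows "(\<And>g. g \<in> G \<Longrightarrow> \<bar>u g\<bar> \<le> B) \<Longrightarrow> g \<in> G \<Longrightarrow> u g \<le> Sup (u ` G)"
  by (rule cSUP_upper) (auto intro!: bdd_aboveI2[where M=B] dest: abs_le_D1)

lemma Sup_le_Sup_plus:
  fixes u v :: "'b \<Rightarrow> real"
  assumes "G \<noteq> {}" "\<And>g. g \<in> G \<Longrightarrow> \<bar>v g\<bar> \<le> B" "\<And>g. g \<in> G \<Longrightarrow> u g \<le> v g + c"
  shows "Sup (u ` G) \<le> Sup (v ` G) + c"
proof (rule cSUP_least)
  fix g assume g: "g \<in> G"
  have "v g \<le> Sup (v ` G)" by (rule bdd_Sup_upper[OF assms(2) g])
  then show "u g \<le> Sup (v ` G) + c" using assms(3)[OF g] by linarith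
qed (use assms in auto)

lemma Sup_abs_le:
  fixes u :: "'b \<Rightarrow> real"
  assumes "G \<noteq> {}" "\<And>g. g \<in> G \<Longrightarrow> \<bar>u g\<bar> \<le> B"
  shows "\<bar>Sup (u ` G)\<bar> \<le> B"
proof -
  obtain g0 where g0: "g0 \<in> G" using assms(1) by auto
  have "Sup (u ` G) \<le> B" by (rule cSUP_least) (use assms in \<open>auto dest: abs_le_D1\<close>)
  moreover have "u g0 \<le> Sup (u ` G)" by (rule bdd_Sup_upper[OF assms(2) g0])
  moreover have "-B \<le> u g0" using assms(2)[OF g0] by linarith
  ultimately show ?thesis by linarith
qed

lemma sum_diff_one:
  fixes h :: "nat \<Rightarrow> 'a \<Rightarrow> real"
  assumes "i < m" "\<forall>j<m. j \<noteq> i \<longrightarrow> xs!j = ys!j"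
  shows "(\<Sum>j<m. h j (xs!j)) - (\<Sum>j<m. h j (ys!j)) = h i (xs!i) - h i (ys!i)"
proof -
  have "(\<Sum>j<m. h j (xs!j)) - (\<Sum>j<m. h j (ys!j)) = (\<Sum>j<m. h j (xs!j) - h j (ys!j))"
    by (simp add: sum_subtractf)
  also have "\<dots> = (\<Sum>j<m. if j = i then h i (xs!i) - h i (ys!i) else 0)"
    by (intro sum.cong refl) (use assms in auto)
  also have "\<dots> = h i (xs!i) - h i (ys!i)" using assms by simp
  finally show ?thesis .
qed


fun swp :: "real list \<Rightarrow> ('a \<times> 'a) list \<Rightarrow> ('a \<times> 'a) list" where
  "swp (s # \<sigma>) (p # ps) = (if s = 1 then p else prod.swap p) # swp \<sigma> ps"
| "swp _ _ = []"

lemma swp_length: "length \<sigma> = length ps \<Longrightarrow> length (swp \<sigma> ps) = length ps"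
  by (induction \<sigma> ps rule: swp.induct) auto

lemma swp_nth: "length \<sigma> = length ps \<Longrightarrow> i < length ps \<Longrightarrow>
    swp \<sigma> ps ! i = (if \<sigma> ! i = 1 then ps ! i else prod.swap (ps ! i))"
  by (induction \<sigma> ps arbitrary: i rule: swp.induct) (auto simp: nth_Cons split: nat.splits)

lemma swap_pair_pmf: "map_pmf prod.swap (pair_pmf A A) = pair_pmf A A"
proof -
  have "prod.swap = (\<lambda>(x::'a, y::'a). (y, x))" by (auto simp: fun_eq_iff)
  then show ?thesis by (metis pair_commute_pmf)
qed

lemma swp_invariant:
  "length \<sigma> = m \<Longrightarrow> map_pmf (swp \<sigma>) (iid_sample (pair_pmf D D) m) = iid_sample (pair_pmf D D) m"
proof (induction m arbitrary: \<sigma>)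
  case 0 then show ?case by simp
next
  case (Suc m)
  then obtain s \<sigma>' where s: "\<sigma> = s # \<sigma>'" "length \<sigma>' = m" by (cases \<sigma>) auto
  define h where "h = (\<lambda>p::'a\<times>'a. if s = 1 then p else prod.swap p)"
  have hP: "map_pmf h (pair_pmf D D) = pair_pmf D D"
    by (cases "s = 1") (simp_all add: h_def swap_pair_pmf)
  have "map_pmf (swp \<sigma>) (iid_sample (pair_pmf D D) (Suc m))
      = bind_pmf (pair_pmf D D) (\<lambda>p. map_pmf ((#) (h p)) (map_pmf (swp \<sigma>') (iid_sample (pair_pmf D D) m)))"
    by (simp add: s map_bind_pmf pmf.map_comp o_def h_def)
  also have "\<dots> = bind_pmf (pair_pmf D D) (\<lambda>p. map_pmf ((#) (h p)) (iid_sample (pair_pmf D D) m))"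
    using Suc.IH[OF s(2)] by simp
  also have "\<dots> = bind_pmf (map_pmf h (pair_pmf D D)) (\<lambda>q. map_pmf ((#) q) (iid_sample (pair_pmf D D) m))"
    by (simp add: bind_map_pmf)
  also have "\<dots> = iid_sample (pair_pmf D D) (Suc m)" by (simp add: hP)
  finally show ?case .
qed

lemma EE_pair:
  assumes "finite (set_pmf D)"
  shows "EE (pair_pmf D D) h = EE D (\<lambda>a. EE D (\<lambda>b. h (a, b)))"
  unfolding pair_pmf_def using assms by (simp add: EE_bind_fin)

lemma EE_joint:
  assumes fin: "finite (set_pmf D)"
  shows "EE (iid_sample (pair_pmf D D) m) (\<lambda>ps. F (map fst ps) (map snd ps))
       = EE (iid_sample D m) (\<lambda>S. EE (iid_sample D m) (\<lambda>S'. F S S'))"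
proof (induction m arbitrary: F)
  case 0 then show ?case by simp
next
  case (Suc m)
  have finP: "finite (set_pmf (pair_pmf D D))" using fin by simp
  define I where "I = iid_sample D m"
  have fI: "finite (set_pmf I)" using fin finite_iid I_def by blast
  have sw: "EE I (\<lambda>S. EE D (\<lambda>b. H S b)) = EE D (\<lambda>b. EE I (\<lambda>S. H S b))" for H
    by (rule EE_swap[OF fI fin])
  have "EE (iid_sample (pair_pmf D D) (Suc m)) (\<lambda>ps. F (map fst ps) (map snd ps))
      = EE (pair_pmf D D) (\<lambda>p. EE (iid_sample (pair_pmf D D) m) (\<lambda>ps. F (fst p # map fst ps) (snd p # map snd ps)))"
    using EE_iid_Suc[OF finP, of m "\<lambda>ps. F (map fst ps) (map snd ps)"] by simp
  also have "\<dots> = EE (pair_pmf D D) (\<lambda>p. EE I (\<lambda>S. EE I (\<lambda>S'. F (fst p # S) (snd p # S'))))"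
  proof (intro Bochner_Integration.integral_cong refl)
    fix p :: "'a \<times> 'a"
    show "EE (iid_sample (pair_pmf D D) m) (\<lambda>ps. F (fst p # map fst ps) (snd p # map snd ps)) =
          EE I (\<lambda>S. EE I (\<lambda>S'. F (fst p # S) (snd p # S')))"
      using Suc.IH[of "\<lambda>S S'. F (fst p # S) (snd p # S')"] by (simp add: I_def)
  qed
  also have "\<dots> = EE D (\<lambda>a. EE D (\<lambda>b. EE I (\<lambda>S. EE I (\<lambda>S'. F (a # S) (b # S')))))"
    by (simp add: EE_pair[OF fin])
  also have "\<dots> = EE D (\<lambda>a. EE I (\<lambda>S. EE D (\<lambda>b. EE I (\<lambda>S'. F (a # S) (b # S')))))"
    by (simp add: sw)
  also have "\<dots> = EE (iid_sample D (Suc m)) (\<lambda>S. EE (iid_sample D (Suc m)) (\<lambda>S'. F S S'))"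
    by (simp only: EE_iid_Suc[OF fin] I_def)
  finally show ?case .
qed

definition ehat :: "nat \<Rightarrow> ('a \<Rightarrow> real) \<Rightarrow> 'a list \<Rightarrow> real" where
  "ehat m g S = (\<Sum>i<m. g (S ! i)) / real m"

definition rsup :: "nat \<Rightarrow> ('a \<Rightarrow> real) set \<Rightarrow> real list \<Rightarrow> 'a list \<Rightarrow> real" where
  "rsup m G \<sigma> S = Sup ((\<lambda>g. (\<Sum>i<m. \<sigma> ! i * g (S ! i)) / real m) ` G)"

definition radm :: "nat \<Rightarrow> ('a \<Rightarrow> real) set \<Rightarrow> 'a list \<Rightarrow> real" where
  "radm m G S = (\<Sum>\<sigma>\<in>sign_vectors m. rsup m G \<sigma> S) / 2 ^ m"

lemma radm_eq: "length S = m \<Longrightarrow> emp_rademacher G S = radm m G S"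
  unfolding emp_rademacher_def radm_def rsup_def by (simp add: Setcompr_eq_image)

definition Phi :: "'a pmf \<Rightarrow> nat \<Rightarrow> ('a \<Rightarrow> real) set \<Rightarrow> 'a list \<Rightarrow> real" where
  "Phi D m G S = Sup ((\<lambda>g. EE D g - ehat m g S) ` G)"


lemma nth_in_set_pmf: "set S \<subseteq> A \<Longrightarrow> length S = m \<Longrightarrow> i < m \<Longrightarrow> S ! i \<in> A"
  using nth_mem by blast

context
  fixes D :: "'a pmf" and G :: "('a \<Rightarrow> real) set" and m :: nat
  assumes fin: "finite (set_pmf D)" and Gne: "G \<noteq> {}"
    and GbH: "\<forall>g\<in>G. \<forall>z\<in>set_pmf D. 0 \<le> g z \<and> g z \<le> 1"
    and mpos: "m > 0"
begin

lemma Gb: "g \<in> G \<Longrightarrow> z \<in> set_pmf D \<Longrightarrow> 0 \<le> g z \<and> g z \<le> 1"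
  using GbH by blast

lemma fM: "finite (set_pmf (iid_sample D m))" using finite_iid[OF fin] .

lemma EE_g: "g \<in> G \<Longrightarrow> 0 \<le> EE D g \<and> EE D g \<le> 1"
proof -
  assume g: "g \<in> G"
  have "0 \<le> EE D g" by (rule integral_nonneg_AE) (auto simp: AE_measure_pmf_iff Gb[OF g])
  moreover have "EE D g \<le> EE D (\<lambda>_. 1)"
    by (rule integral_mono_AE) (auto simp: AE_measure_pmf_iff Gb[OF g] fin)
  ultimately show ?thesis by simp
qed

lemma ehat_b: "g \<in> G \<Longrightarrow> length S = m \<Longrightarrow> set S \<subseteq> set_pmf D \<Longrightarrow> 0 \<le> ehat m g S \<and> ehat m g S \<le> 1"
proof -
  assume a: "g \<in> G" "length S = m" "set S \<subseteq> set_pmf D"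
  have b: "0 \<le> g (S!i) \<and> g (S!i) \<le> 1" if "i < m" for i
    using Gb[OF a(1) nth_in_set_pmf[OF a(3) a(2) that]] .
  have "0 \<le> (\<Sum>i<m. g (S!i))" using b by (intro sum_nonneg) auto
  moreover have "(\<Sum>i<m. g (S!i)) \<le> (\<Sum>i<m. 1)" using b by (intro sum_mono) auto
  ultimately show ?thesis using mpos by (simp add: ehat_def divide_le_eq_1)
qed

lemma term_b:
  assumes "\<sigma> \<in> sign_vectors m" "g \<in> G" "length S = m" "set S \<subseteq> set_pmf D"
  shows "\<bar>(\<Sum>i<m. \<sigma> ! i * g (S ! i)) / real m\<bar> \<le> 1"
proof -
  have b: "\<bar>\<sigma> ! i * g (S!i)\<bar> \<le> 1" if "i < m" for i
    using Gb[OF assms(2) nth_in_set_pmf[OF assms(4) assms(3) that]] sign_abs[OF assms(1) that]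
    by (simp add: abs_mult)
  have "\<bar>\<Sum>i<m. \<sigma> ! i * g (S ! i)\<bar> \<le> (\<Sum>i<m. \<bar>\<sigma> ! i * g (S ! i)\<bar>)" by (rule sum_abs)
  also have "\<dots> \<le> (\<Sum>i<m. 1)" using b by (intro sum_mono) auto
  finally show ?thesis using mpos by (simp add: divide_le_eq_1)
qed

lemma Phi_bd: "bdd_diff D m (1 / real m) (Phi D m G)"
  unfolding bdd_diff_def
proof (intro allI impI)
  fix xs ys i
  assume h: "length xs = m" "length ys = m" "set xs \<subseteq> set_pmf D" "set ys \<subseteq> set_pmf D" "i < m"
    "\<forall>j<m. j \<noteq> i \<longrightarrow> xs ! j = ys ! j"
  have "Phi D m G xs \<le> Phi D m G ys + 1 / real m"
    unfolding Phi_def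
  proof (rule Sup_le_Sup_plus[OF Gne])
    fix g assume g: "g \<in> G"
    show "\<bar>EE D g - ehat m g ys\<bar> \<le> 1" using EE_g[OF g] ehat_b[OF g h(2) h(4)] by linarith
    have h6: "\<forall>j<m. j \<noteq> i \<longrightarrow> ys ! j = xs ! j" using h(6) by auto
    have "ehat m g ys - ehat m g xs = (g (ys!i) - g (xs!i)) / real m"
      unfolding ehat_def diff_divide_distrib[symmetric]
      using sum_diff_one[OF h(5) h6, of "\<lambda>j x. g x"] by simp
    also have "\<dots> \<le> 1 / real m"
      using Gb[OF g nth_in_set_pmf[OF h(4) h(2) h(5)]] Gb[OF g nth_in_set_pmf[OF h(3) h(1) h(5)]] mpos
      by (intro divide_right_mono) auto
    finally show "EE D g - ehat m g xs \<le> EE D g - ehat m g ys + 1 / real m" by linarith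
  qed
  then show "Phi D m G xs - Phi D m G ys \<le> 1 / real m" by linarith
qed

lemma rsup_le:
  assumes s: "\<sigma> \<in> sign_vectors m" and h: "length xs = m" "length ys = m" "set xs \<subseteq> set_pmf D"
    "set ys \<subseteq> set_pmf D" "i < m" "\<forall>j<m. j \<noteq> i \<longrightarrow> xs ! j = ys ! j"
  shows "rsup m G \<sigma> xs \<le> rsup m G \<sigma> ys + 1 / real m"
  unfolding rsup_def
proof (rule Sup_le_Sup_plus[OF Gne])
  fix g assume g: "g \<in> G"
  show "\<bar>(\<Sum>i<m. \<sigma> ! i * g (ys ! i)) / real m\<bar> \<le> 1" by (rule term_b[OF s g h(2) h(4)])
  have "(\<Sum>j<m. \<sigma> ! j * g (xs!j)) - (\<Sum>j<m. \<sigma> ! j * g (ys!j)) = \<sigma> ! i * g (xs!i) - \<sigma> ! i * g (ys!i)"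
    by (rule sum_diff_one[OF h(5) h(6)])
  also have "\<dots> \<le> 1"
    using Gb[OF g nth_in_set_pmf[OF h(4) h(2) h(5)]] Gb[OF g nth_in_set_pmf[OF h(3) h(1) h(5)]]
      sign_nth[OF s h(5)] by auto
  finally have "(\<Sum>j<m. \<sigma> ! j * g (xs!j)) / real m \<le> ((\<Sum>j<m. \<sigma> ! j * g (ys!j)) + 1) / real m"
    using mpos by (intro divide_right_mono) auto
  then show "(\<Sum>j<m. \<sigma> ! j * g (xs!j)) / real m \<le> (\<Sum>j<m. \<sigma> ! j * g (ys!j)) / real m + 1 / real m"
    by (simp add: add_divide_distrib)
qed

lemma radm_le:
  assumes h: "length xs = m" "length ys = m" "set xs \<subseteq> set_pmf D"
    "set ys \<subseteq> set_pmf D" "i < m" "\<forall>j<m. j \<noteq> i \<longrightarrow> xs ! j = ys ! j"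
  shows "radm m G xs \<le> radm m G ys + 1 / real m"
proof -
  have "(\<Sum>\<sigma>\<in>sign_vectors m. rsup m G \<sigma> xs) \<le> (\<Sum>\<sigma>\<in>sign_vectors m. rsup m G \<sigma> ys + 1 / real m)"
    by (intro sum_mono rsup_le[OF _ h])
  also have "\<dots> = (\<Sum>\<sigma>\<in>sign_vectors m. rsup m G \<sigma> ys) + 2 ^ m * (1 / real m)"
    by (simp add: sum.distrib sign_vectors_card)
  finally have "(\<Sum>\<sigma>\<in>sign_vectors m. rsup m G \<sigma> xs) / 2 ^ m
      \<le> ((\<Sum>\<sigma>\<in>sign_vectors m. rsup m G \<sigma> ys) + 2 ^ m * (1 / real m)) / 2 ^ m"
    by (rule divide_right_mono) simp
  then show ?thesis unfolding radm_def by (simp add: add_divide_distrib)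
qed

lemma radm_bd: "bdd_diff D m (1 / real m) (radm m G)"
  unfolding bdd_diff_def
proof (intro allI impI)
  fix xs ys i
  assume h: "length xs = m" "length ys = m" "set xs \<subseteq> set_pmf D" "set ys \<subseteq> set_pmf D" "i < m"
    "\<forall>j<m. j \<noteq> i \<longrightarrow> xs ! j = ys ! j"
  show "radm m G xs - radm m G ys \<le> 1 / real m" using radm_le[OF h] by linarith
qed

lemma radm_neg_bd: "bdd_diff D m (1 / real m) (\<lambda>S. - radm m G S)"
  unfolding bdd_diff_def
proof (intro allI impI)
  fix xs ys i
  assume h: "length xs = m" "length ys = m" "set xs \<subseteq> set_pmf D" "set ys \<subseteq> set_pmf D" "i < m"
    "\<forall>j<m. j \<noteq> i \<longrightarrow> xs ! j = ys ! j"
  have h6: "\<forall>j<m. j \<noteq> i \<longrightarrow> ys ! j = xs ! j" using h(6) by auto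
  show "- radm m G xs - - radm m G ys \<le> 1 / real m"
    using radm_le[OF h(2) h(1) h(4) h(3) h(5) h6] by linarith
qed

lemma EE_ehat: "EE (iid_sample D m) (ehat m g) = EE D g"
proof -
  have "EE (iid_sample D m) (ehat m g) = (\<Sum>i<m. EE (iid_sample D m) (\<lambda>S. g (S ! i))) / real m"
    unfolding ehat_def by (simp add: fM)
  also have "\<dots> = (\<Sum>i<m. EE D g) / real m" by (simp add: EE_iid_nth)
  also have "\<dots> = EE D g" using mpos by simp
  finally show ?thesis .
qed

end


definition Wf :: "nat \<Rightarrow> ('a \<Rightarrow> real) set \<Rightarrow> 'a list \<Rightarrow> 'a list \<Rightarrow> real" where
  "Wf m G S S' = Sup ((\<lambda>g. ehat m g S' - ehat m g S) ` G)"

definition Ws :: "nat \<Rightarrow> ('a \<Rightarrow> real) set \<Rightarrow> real list \<Rightarrow> ('a \<times> 'a) list \<Rightarrow> real" where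
  "Ws m G \<sigma> ps = Sup ((\<lambda>g. (\<Sum>i<m. \<sigma> ! i * (g (snd (ps ! i)) - g (fst (ps ! i)))) / real m) ` G)"

lemma iid_pair_set: "ps \<in> set_pmf (iid_sample (pair_pmf D D) m) \<Longrightarrow>
   length (map fst ps) = m \<and> set (map fst ps) \<subseteq> set_pmf D \<and> length (map snd ps) = m \<and> set (map snd ps) \<subseteq> set_pmf D"
proof -
  assume "ps \<in> set_pmf (iid_sample (pair_pmf D D) m)"
  then have "length ps = m" "set ps \<subseteq> set_pmf D \<times> set_pmf D"
    using iid_sample_set[of "pair_pmf D D" m] by auto
  then show ?thesis by auto
qed

context
  fixes D :: "'a pmf" and G :: "('a \<Rightarrow> real) set" and m :: nat
  assumes fin: "finite (set_pmf D)" and Gne: "G \<noteq> {}"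
    and GbH: "\<forall>g\<in>G. \<forall>z\<in>set_pmf D. 0 \<le> g z \<and> g z \<le> 1"
    and mpos: "m > 0"
begin

lemma Gb4: "g \<in> G \<Longrightarrow> z \<in> set_pmf D \<Longrightarrow> 0 \<le> g z \<and> g z \<le> 1"
  using GbH by blast

lemma finP: "finite (set_pmf (iid_sample (pair_pmf D D) m))" using finite_iid[of "pair_pmf D D"] fin by simp

lemma fM': "finite (set_pmf (iid_sample D m))" using finite_iid[OF fin] .

lemma Phi_le_W:
  assumes S: "S \<in> set_pmf (iid_sample D m)"
  shows "Phi D m G S \<le> EE (iid_sample D m) (Wf m G S)"
  unfolding Phi_def
proof (rule cSUP_least[OF Gne])
  fix g assume g: "g \<in> G"
  have Sl: "length S = m" "set S \<subseteq> set_pmf D" using S iid_sample_set by blast+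
  have "EE D g - ehat m g S = EE (iid_sample D m) (\<lambda>S'. ehat m g S' - ehat m g S)"
    using EE_ehat[where D=D and G=G and m=m, OF fin Gne GbH mpos, of g] fM' by simp
  also have "\<dots> \<le> EE (iid_sample D m) (Wf m G S)"
  proof (rule integral_mono_AE)
    show "AE S' in measure_pmf (iid_sample D m). ehat m g S' - ehat m g S \<le> Wf m G S S'"
      unfolding AE_measure_pmf_iff
    proof
      fix S' assume "S' \<in> set_pmf (iid_sample D m)"
      then have S'l: "length S' = m" "set S' \<subseteq> set_pmf D" using iid_sample_set by blast+
      show "ehat m g S' - ehat m g S \<le> Wf m G S S'" unfolding Wf_def
      proof (rule bdd_Sup_upper[OF _ g])
        fix h assume h: "h \<in> G"
        show "\<bar>ehat m h S' - ehat m h S\<bar> \<le> 1"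
          using ehat_b[where D=D and G=G and m=m, OF fin Gne GbH mpos h S'l] ehat_b[where D=D and G=G and m=m, OF fin Gne GbH mpos h Sl] by linarith
      qed
    qed
  qed (use fM' in auto)
  finally show "EE D g - ehat m g S \<le> EE (iid_sample D m) (Wf m G S)" .
qed

lemma W_swap:
  assumes s: "\<sigma> \<in> sign_vectors m"
  shows "EE (iid_sample (pair_pmf D D) m) (\<lambda>ps. Wf m G (map fst ps) (map snd ps))
       = EE (iid_sample (pair_pmf D D) m) (Ws m G \<sigma>)"
proof -
  define P where "P = iid_sample (pair_pmf D D) m"
  have ls: "length \<sigma> = m" using s by (simp add: sign_vectors_def)
  have "EE P (\<lambda>ps. Wf m G (map fst ps) (map snd ps)) = EE (map_pmf (swp \<sigma>) P) (\<lambda>ps. Wf m G (map fst ps) (map snd ps))"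
    using swp_invariant[OF ls, of D] by (simp add: P_def)
  also have "\<dots> = EE P (\<lambda>ps. Wf m G (map fst (swp \<sigma> ps)) (map snd (swp \<sigma> ps)))" by simp
  also have "\<dots> = EE P (Ws m G \<sigma>)"
  proof (rule integral_cong_AE)
    show "AE ps in measure_pmf P. Wf m G (map fst (swp \<sigma> ps)) (map snd (swp \<sigma> ps)) = Ws m G \<sigma> ps"
      unfolding AE_measure_pmf_iff
    proof
      fix ps assume "ps \<in> set_pmf P"
      then have lp: "length ps = m" using iid_sample_set P_def by fastforce
      have lsw: "length (swp \<sigma> ps) = m" using swp_length[of \<sigma> ps] ls lp by simp
      have eq: "ehat m g (map snd (swp \<sigma> ps)) - ehat m g (map fst (swp \<sigma> ps))
          = (\<Sum>i<m. \<sigma> ! i * (g (snd (ps ! i)) - g (fst (ps ! i)))) / real m" for g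
      proof -
        have "ehat m g (map snd (swp \<sigma> ps)) - ehat m g (map fst (swp \<sigma> ps))
            = (\<Sum>i<m. g (snd (swp \<sigma> ps ! i)) - g (fst (swp \<sigma> ps ! i))) / real m"
          unfolding ehat_def diff_divide_distrib[symmetric] sum_subtractf using lsw by simp
        also have "\<dots> = (\<Sum>i<m. \<sigma> ! i * (g (snd (ps ! i)) - g (fst (ps ! i)))) / real m"
        proof (intro arg_cong2[where f="(/)"] sum.cong refl)
          fix i assume i: "i \<in> {..<m}"
          then have "\<sigma> ! i = 1 \<or> \<sigma> ! i = -1" using sign_nth[OF s] by auto
          then show "g (snd (swp \<sigma> ps ! i)) - g (fst (swp \<sigma> ps ! i)) = \<sigma> ! i * (g (snd (ps ! i)) - g (fst (ps ! i)))"
            using swp_nth[of \<sigma> ps i] ls lp i by (auto simp: prod.swap_def)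
        qed
        finally show ?thesis .
      qed
      show "Wf m G (map fst (swp \<sigma> ps)) (map snd (swp \<sigma> ps)) = Ws m G \<sigma> ps"
        unfolding Wf_def Ws_def by (simp add: eq)
    qed
  qed simp_all
  finally show ?thesis by (simp add: P_def)
qed

lemma Ws_le:
  assumes s: "\<sigma> \<in> sign_vectors m" and ps: "ps \<in> set_pmf (iid_sample (pair_pmf D D) m)"
  shows "Ws m G \<sigma> ps \<le> rsup m G \<sigma> (map snd ps) + rsup m G (map uminus \<sigma>) (map fst ps)"
  unfolding Ws_def
proof (rule cSUP_least[OF Gne])
  fix g assume g: "g \<in> G"
  note l = iid_pair_set[OF ps]
  have lp: "length ps = m" using l by simp
  have ls: "length \<sigma> = m" using s by (simp add: sign_vectors_def)
  have "(\<Sum>i<m. \<sigma> ! i * (g (snd (ps ! i)) - g (fst (ps ! i)))) / real m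
      = (\<Sum>i<m. \<sigma> ! i * g (map snd ps ! i)) / real m + (\<Sum>i<m. map uminus \<sigma> ! i * g (map fst ps ! i)) / real m"
    unfolding add_divide_distrib[symmetric] sum.distrib[symmetric]
    by (intro arg_cong2[where f="(/)"] sum.cong refl) (use lp ls in \<open>auto simp: algebra_simps\<close>)
  also have "\<dots> \<le> rsup m G \<sigma> (map snd ps) + rsup m G (map uminus \<sigma>) (map fst ps)"
    unfolding rsup_def
  proof (rule add_mono)
    show "(\<Sum>i<m. \<sigma> ! i * g (map snd ps ! i)) / real m \<le> Sup ((\<lambda>g. (\<Sum>i<m. \<sigma> ! i * g (map snd ps ! i)) / real m) ` G)"
      by (rule bdd_Sup_upper[OF _ g], rule term_b[where D=D and G=G and m=m, OF fin Gne GbH mpos s]) (use l in auto)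
    show "(\<Sum>i<m. map uminus \<sigma> ! i * g (map fst ps ! i)) / real m \<le> Sup ((\<lambda>g. (\<Sum>i<m. map uminus \<sigma> ! i * g (map fst ps ! i)) / real m) ` G)"
      by (rule bdd_Sup_upper[OF _ g], rule term_b[where D=D and G=G and m=m, OF fin Gne GbH mpos sign_neg_mem[OF s]]) (use l in auto)
  qed
  finally show "(\<Sum>i<m. \<sigma> ! i * (g (snd (ps ! i)) - g (fst (ps ! i)))) / real m
      \<le> rsup m G \<sigma> (map snd ps) + rsup m G (map uminus \<sigma>) (map fst ps)" .
qed

lemma symmetrization:
  "EE (iid_sample D m) (Phi D m G) \<le> 2 * EE (iid_sample D m) (radm m G)"
proof -
  define M where "M = iid_sample D m"
  define P where "P = iid_sample (pair_pmf D D) m"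
  have fMM: "finite (set_pmf M)" using fM' M_def by simp
  have fPP: "finite (set_pmf P)" using finP P_def by simp
  have fSV: "finite (sign_vectors m)" by (rule sign_vectors_finite)
  have "EE M (Phi D m G) \<le> EE M (\<lambda>S. EE M (Wf m G S))"
    by (rule integral_mono_AE) (use fMM Phi_le_W M_def in \<open>auto simp: AE_measure_pmf_iff\<close>)
  also have "\<dots> = EE P (\<lambda>ps. Wf m G (map fst ps) (map snd ps))"
    using EE_joint[OF fin, of m "Wf m G"] by (simp add: M_def P_def)
  also have "\<dots> = (\<Sum>\<sigma>\<in>sign_vectors m. EE P (Ws m G \<sigma>)) / 2 ^ m"
  proof -
    have "(\<Sum>\<sigma>\<in>sign_vectors m. EE P (Ws m G \<sigma>)) = (\<Sum>\<sigma>\<in>sign_vectors m. EE P (\<lambda>ps. Wf m G (map fst ps) (map snd ps)))"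
      using W_swap P_def by simp
    also have "\<dots> = 2 ^ m * EE P (\<lambda>ps. Wf m G (map fst ps) (map snd ps))"
      by (simp add: sign_vectors_card)
    finally show ?thesis by simp
  qed
  also have "\<dots> = EE P (\<lambda>ps. (\<Sum>\<sigma>\<in>sign_vectors m. Ws m G \<sigma> ps) / 2 ^ m)"
    using fPP by simp
  also have "\<dots> \<le> EE P (\<lambda>ps. radm m G (map snd ps) + radm m G (map fst ps))"
  proof (rule integral_mono_AE)
    show "AE ps in measure_pmf P. (\<Sum>\<sigma>\<in>sign_vectors m. Ws m G \<sigma> ps) / 2 ^ m \<le> radm m G (map snd ps) + radm m G (map fst ps)"
      unfolding AE_measure_pmf_iff
    proof
      fix ps assume ps: "ps \<in> set_pmf P"
      have "(\<Sum>\<sigma>\<in>sign_vectors m. Ws m G \<sigma> ps) \<le> (\<Sum>\<sigma>\<in>sign_vectors m. rsup m G \<sigma> (map snd ps) + rsup m G (map uminus \<sigma>) (map fst ps))"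
        by (intro sum_mono Ws_le) (use ps P_def in auto)
      also have "\<dots> = (\<Sum>\<sigma>\<in>sign_vectors m. rsup m G \<sigma> (map snd ps)) + (\<Sum>\<sigma>\<in>sign_vectors m. rsup m G \<sigma> (map fst ps))"
        by (simp add: sum.distrib sum_sign_neg[of "\<lambda>\<sigma>. rsup m G \<sigma> (map fst ps)"])
      finally show "(\<Sum>\<sigma>\<in>sign_vectors m. Ws m G \<sigma> ps) / 2 ^ m \<le> radm m G (map snd ps) + radm m G (map fst ps)"
        unfolding radm_def add_divide_distrib[symmetric] by (rule divide_right_mono) simp
    qed
  qed (use fPP in auto)
  also have "\<dots> = EE M (\<lambda>S. EE M (\<lambda>S'. radm m G S' + radm m G S))"
    using EE_joint[OF fin, of m "\<lambda>S S'. radm m G S' + radm m G S"] by (simp add: M_def P_def)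
  also have "\<dots> = 2 * EE M (radm m G)"
    using fMM by simp
  finally show ?thesis by (simp add: M_def)
qed

end


theorem generic_bound:
  fixes D :: "'a pmf" and G :: "('a \<Rightarrow> real) set" and m :: nat and \<delta> :: real
  assumes fin: "finite (set_pmf D)" and Gne: "G \<noteq> {}"
    and GbH: "\<forall>g\<in>G. \<forall>z\<in>set_pmf D. 0 \<le> g z \<and> g z \<le> 1"
    and mpos: "m > 0" and d0: "0 < \<delta>" and d1: "\<delta> < 1"
  shows "measure_pmf.prob (iid_sample D m)
     {S. \<forall>g\<in>G. EE D g \<le> ehat m g S + 2 * radm m G S + 3 * sqrt (ln (2 / \<delta>) / (2 * real m))} \<ge> 1 - \<delta>"
proof -
  define M where "M = iid_sample D m"
  define t where "t = sqrt (ln (2 / \<delta>) / (2 * real m))"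
  define Good where "Good = {S. \<forall>g\<in>G. EE D g \<le> ehat m g S + 2 * radm m G S + 3 * t}"
  have "2 / \<delta> > 1" using d0 d1 by (simp add: less_divide_eq)
  then have lnpos: "ln (2 / \<delta>) > 0" by (rule ln_gt_zero)
  have t: "t > 0" unfolding t_def using lnpos mpos by simp
  have t2: "t^2 = ln (2 / \<delta>) / (2 * real m)" unfolding t_def using lnpos mpos by simp
  have ex: "exp (-2 * t^2 / (real m * (1 / real m)^2)) = \<delta> / 2"
  proof -
    have e1: "-2 * t^2 / (real m * (1 / real m)^2) = - (t^2 * (2 * real m))"
      using mpos by (simp add: field_simps power2_eq_square)
    have e2: "t^2 * (2 * real m) = ln (2 / \<delta>)" using t2 mpos by simp
    have "-2 * t^2 / (real m * (1 / real m)^2) = - ln (2 / \<delta>)" using e1 e2 by simp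
    then show ?thesis using d0 by (simp add: exp_minus)
  qed
  have c: "1 / real m > 0" using mpos by simp
  define A1 where "A1 = {S. Phi D m G S - EE M (Phi D m G) \<ge> t}"
  define A2 where "A2 = {S. - radm m G S - EE M (\<lambda>S. - radm m G S) \<ge> t}"
  have p1: "measure_pmf.prob M A1 \<le> \<delta> / 2"
    using mcdiarmid[OF fin mpos c t Phi_bd[OF fin Gne GbH mpos]] ex by (simp add: A1_def M_def)
  have p2: "measure_pmf.prob M A2 \<le> \<delta> / 2"
    using mcdiarmid[OF fin mpos c t radm_neg_bd[OF fin Gne GbH mpos]] ex by (simp add: A2_def M_def)
  have sym: "EE M (Phi D m G) \<le> 2 * EE M (radm m G)"
    using symmetrization[OF fin Gne GbH mpos] by (simp add: M_def)
  have fMM: "finite (set_pmf M)" using finite_iid[OF fin] M_def by simp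
  have sub: "(UNIV - (A1 \<union> A2)) \<inter> set_pmf M \<subseteq> Good"
  proof
    fix S assume S: "S \<in> (UNIV - (A1 \<union> A2)) \<inter> set_pmf M"
    then have Sl: "length S = m" "set S \<subseteq> set_pmf D" using iid_sample_set M_def by blast+
    have a1: "Phi D m G S < EE M (Phi D m G) + t" using S by (auto simp: A1_def)
    have a2: "EE M (radm m G) < radm m G S + t" using S fMM by (auto simp: A2_def)
    show "S \<in> Good" unfolding Good_def
    proof (intro CollectI ballI)
      fix g assume g: "g \<in> G"
      have "EE D g - ehat m g S \<le> Phi D m G S"
        unfolding Phi_def
      proof (rule bdd_Sup_upper[OF _ g])
        fix h assume h: "h \<in> G"
        show "\<bar>EE D h - ehat m h S\<bar> \<le> 1"
          using EE_g[OF fin Gne GbH mpos h] ehat_b[OF fin Gne GbH mpos h Sl] by linarith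
      qed
      then show "EE D g \<le> ehat m g S + 2 * radm m G S + 3 * t" using a1 a2 sym by linarith
    qed
  qed
  have "1 - \<delta> \<le> 1 - (measure_pmf.prob M A1 + measure_pmf.prob M A2)" using p1 p2 by linarith
  also have "\<dots> \<le> 1 - measure_pmf.prob M (A1 \<union> A2)"
    using measure_subadditive[of A1 "measure_pmf M" A2] by simp
  also have "\<dots> = measure_pmf.prob M (UNIV - (A1 \<union> A2))"
    using measure_pmf.prob_compl[of "A1 \<union> A2" M] by simp
  also have "\<dots> = measure_pmf.prob M ((UNIV - (A1 \<union> A2)) \<inter> set_pmf M)"
    by (simp add: measure_Int_set_pmf)
  also have "\<dots> \<le> measure_pmf.prob M Good"
    by (rule measure_pmf.finite_measure_mono[OF sub]) simp
  finally show ?thesis by (simp add: Good_def M_def t_def)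
qed


lemma qdim_pos: "qdim n > 0" by (simp add: qdim_def)

lemma basis_proj_carrier[simp]: "basis_proj n x \<in> carrier_mat (qdim n) (qdim n)"
  by (simp add: basis_proj_def)

lemma dim_basis_proj[simp]: "dim_row (basis_proj n x) = qdim n" "dim_col (basis_proj n x) = qdim n"
  by (simp_all add: basis_proj_def)

lemma row_basis_proj: "i < qdim n \<Longrightarrow> x < qdim n \<Longrightarrow>
   row (basis_proj n x) i = (if i = x then unit_vec (qdim n) x else 0\<^sub>v (qdim n))"
  by (rule eq_vecI) (auto simp: basis_proj_def unit_vec_def)

lemma col_basis_proj: "i < qdim n \<Longrightarrow> x < qdim n \<Longrightarrow>
   col (basis_proj n x) i = (if i = x then unit_vec (qdim n) x else 0\<^sub>v (qdim n))"
  by (rule eq_vecI) (auto simp: basis_proj_def unit_vec_def)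

lemma mtrace_mult_proj:
  assumes A: "A \<in> carrier_mat (qdim n) (qdim n)" and y: "y < qdim n"
  shows "mtrace (A * basis_proj n y) = A $$ (y, y)"
proof -
  have "mtrace (A * basis_proj n y) = (\<Sum>i<qdim n. (A * basis_proj n y) $$ (i, i))"
    using A by (simp add: mtrace_def)
  also have "\<dots> = (\<Sum>i<qdim n. if i = y then A $$ (y, y) else 0)"
  proof (intro sum.cong refl)
    fix i assume i: "i \<in> {..<qdim n}"
    have "(A * basis_proj n y) $$ (i, i) = row A i \<bullet> col (basis_proj n y) i"
      using A i by (simp add: basis_proj_def)
    also have "\<dots> = (if i = y then A $$ (y, y) else 0)"
      using A i y by (auto simp: col_basis_proj)
    finally show "(A * basis_proj n y) $$ (i, i) = (if i = y then A $$ (y, y) else 0)" .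
  qed
  also have "\<dots> = A $$ (y, y)" using y by simp
  finally show ?thesis .
qed

lemma mtrace_proj: "x < qdim n \<Longrightarrow> mtrace (basis_proj n x) = 1"
  by (simp add: mtrace_def basis_proj_def)

lemma conj_unit_vec: "y < d \<Longrightarrow> conjugate (unit_vec d y :: complex vec) = unit_vec d y"
  by (rule eq_vecI) (auto simp: unit_vec_def)

lemma psd_diag:
  assumes p: "psd d A" and y: "y < d"
  shows "0 \<le> Re (A $$ (y, y))"
proof -
  have A: "A \<in> carrier_mat d d" using p by (simp add: psd_def)
  have v: "unit_vec d y \<in> carrier_vec d" by simp
  have "Matrix.scalar_prod (conjugate (unit_vec d y)) (mult_mat_vec A (unit_vec d y)) = A $$ (y, y)"
  proof -
    have "Matrix.scalar_prod (conjugate (unit_vec d y)) (mult_mat_vec A (unit_vec d y))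
        = (mult_mat_vec A (unit_vec d y)) $ y"
      using A y by (simp add: conj_unit_vec)
    also have "\<dots> = row A y \<bullet> unit_vec d y" using A y by simp
    also have "\<dots> = A $$ (y, y)" using A y by simp
    finally show ?thesis .
  qed
  then show ?thesis using p v unfolding psd_def by metis
qed

lemma psd_proj:
  assumes x: "x < qdim n"
  shows "psd (qdim n) (basis_proj n x)"
  unfolding psd_def
proof (intro conjI ballI)
  show "basis_proj n x \<in> carrier_mat (qdim n) (qdim n)" by simp
  fix v :: "complex vec" assume v: "v \<in> carrier_vec (qdim n)"
  have mv: "mult_mat_vec (basis_proj n x) v = (v $ x) \<cdot>\<^sub>v unit_vec (qdim n) x"
  proof (rule eq_vecI)
    fix i assume "i < dim_vec ((v $ x) \<cdot>\<^sub>v unit_vec (qdim n) x)"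
    then have i: "i < qdim n" by simp
    show "mult_mat_vec (basis_proj n x) v $ i = ((v $ x) \<cdot>\<^sub>v unit_vec (qdim n) x) $ i"
      using i x v by (simp add: row_basis_proj)
  qed simp
  have "Matrix.scalar_prod (conjugate v) (mult_mat_vec (basis_proj n x) v) = v $ x * cnj (v $ x)"
    unfolding mv using v x by (simp add: scalar_prod_smult_right)
  also have "\<dots> = complex_of_real ((cmod (v $ x))^2)" by (simp add: complex_mult_cnj cmod_def)
  finally have e: "Matrix.scalar_prod (conjugate v) (mult_mat_vec (basis_proj n x) v) = complex_of_real ((cmod (v $ x))^2)" .
  show "Im (Matrix.scalar_prod (conjugate v) (mult_mat_vec (basis_proj n x) v)) = 0" unfolding e by simp
  show "0 \<le> Re (Matrix.scalar_prod (conjugate v) (mult_mat_vec (basis_proj n x) v))" unfolding e by simp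
qed

lemma block_00: "X \<in> carrier_mat d d \<Longrightarrow> block d X 0 0 = X"
  by (rule eq_matI) (auto simp: block_def)

lemma channel_carrier: "channel n \<Phi> \<Longrightarrow> X \<in> carrier_mat (qdim n) (qdim n) \<Longrightarrow> \<Phi> X \<in> carrier_mat (qdim n) (qdim n)"
  by (simp add: channel_def)

lemma channel_psd:
  assumes c: "channel n \<Phi>" and p: "psd (qdim n) X"
  shows "psd (qdim n) (\<Phi> X)"
proof -
  have X: "X \<in> carrier_mat (qdim n) (qdim n)" using p by (simp add: psd_def)
  have cp: "completely_positive (qdim n) \<Phi>" using c by (simp add: channel_def)
  have "\<forall>X. psd (1 * qdim n) X \<longrightarrow> psd (1 * qdim n) (id_tensor 1 (qdim n) \<Phi> X)"
    using cp unfolding completely_positive_def by blast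
  then have "psd (1 * qdim n) (id_tensor 1 (qdim n) \<Phi> X)" using p by simp
  moreover have "id_tensor 1 (qdim n) \<Phi> X = \<Phi> X"
  proof (rule eq_matI)
    show "dim_row (id_tensor 1 (qdim n) \<Phi> X) = dim_row (\<Phi> X)" using channel_carrier[OF c X] by (simp add: id_tensor_def)
    show "dim_col (id_tensor 1 (qdim n) \<Phi> X) = dim_col (\<Phi> X)" using channel_carrier[OF c X] by (simp add: id_tensor_def)
    fix i j assume "i < dim_row (\<Phi> X)" "j < dim_col (\<Phi> X)"
    then have ij: "i < qdim n" "j < qdim n" using channel_carrier[OF c X] by auto
    then show "id_tensor 1 (qdim n) \<Phi> X $$ (i, j) = \<Phi> X $$ (i, j)"
      by (simp add: id_tensor_def block_00[OF X])
  qed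
  ultimately show ?thesis by simp
qed

lemma f_chan_diag:
  assumes c: "channel n \<Phi>" and x: "x < qdim n" and y: "y < qdim n"
  shows "f_chan n \<Phi> (x, y) = Re (\<Phi> (basis_proj n x) $$ (y, y))"
  unfolding f_chan_def using mtrace_mult_proj[OF channel_carrier[OF c basis_proj_carrier] y] by simp

lemma f_chan_bounds:
  assumes c: "channel n \<Phi>" and x: "x < qdim n" and y: "y < qdim n"
  shows "0 \<le> f_chan n \<Phi> (x, y) \<and> f_chan n \<Phi> (x, y) \<le> 1"
proof -
  define A where "A = \<Phi> (basis_proj n x)"
  have Ac: "A \<in> carrier_mat (qdim n) (qdim n)" unfolding A_def by (rule channel_carrier[OF c basis_proj_carrier])
  have Ap: "psd (qdim n) A" unfolding A_def by (rule channel_psd[OF c psd_proj[OF x]])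
  have nn: "0 \<le> Re (A $$ (i, i))" if "i < qdim n" for i by (rule psd_diag[OF Ap that])
  have "mtrace A = mtrace (basis_proj n x)"
    using c unfolding A_def channel_def trace_preserving_def by simp
  then have tr: "(\<Sum>i<qdim n. Re (A $$ (i, i))) = 1"
    using Ac mtrace_proj[OF x] by (simp add: mtrace_def flip: Re_sum)
  have "Re (A $$ (y, y)) \<le> (\<Sum>i<qdim n. Re (A $$ (i, i)))"
    by (rule member_le_sum[where f="\<lambda>i. Re (A $$ (i, i))"]) (use y nn in auto)
  then show ?thesis using f_chan_diag[OF c x y] nn[OF y] tr by (simp add: A_def)
qed


lemma divmod_help: "r < (d::nat) \<Longrightarrow> (a * d + r) div d = a \<and> (a * d + r) mod d = r"
proof -
  assume r: "r < d"
  then have d: "d \<noteq> 0" by auto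
  have "(r + a * d) div d = a + r div d" using d by (rule div_mult_self1)
  moreover have "(r + a * d) mod d = r mod d" using d by simp
  ultimately show ?thesis using r by (simp add: add.commute)
qed

lemma idx_help: "a < (m::nat) \<Longrightarrow> r < d \<Longrightarrow> a * d + r < m * d"
proof -
  assume "a < m" "r < d"
  then have "a * d + r < a * d + d" by simp
  also have "\<dots> = Suc a * d" by simp
  also have "\<dots> \<le> m * d" using \<open>a < m\<close> by (intro mult_right_mono) auto
  finally show ?thesis .
qed

lemma block_carrier[simp]: "block d X a b \<in> carrier_mat d d"
  by (simp add: block_def)

lemma dim_block[simp]: "dim_row (block d X a b) = d" "dim_col (block d X a b) = d"
  by (simp_all add: block_def)

lemma id_tensor_comp:
  assumes c2: "\<And>X. X \<in> carrier_mat d d \<Longrightarrow> \<Phi>2 X \<in> carrier_mat d d" and d: "d > 0"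
  shows "id_tensor m d (\<Phi>1 \<circ> \<Phi>2) X = id_tensor m d \<Phi>1 (id_tensor m d \<Phi>2 X)"
proof (rule eq_matI)
  show "dim_row (id_tensor m d (\<Phi>1 \<circ> \<Phi>2) X) = dim_row (id_tensor m d \<Phi>1 (id_tensor m d \<Phi>2 X))"
    by (simp add: id_tensor_def)
  show "dim_col (id_tensor m d (\<Phi>1 \<circ> \<Phi>2) X) = dim_col (id_tensor m d \<Phi>1 (id_tensor m d \<Phi>2 X))"
    by (simp add: id_tensor_def)
  fix i j assume "i < dim_row (id_tensor m d \<Phi>1 (id_tensor m d \<Phi>2 X))" "j < dim_col (id_tensor m d \<Phi>1 (id_tensor m d \<Phi>2 X))"
  then have ij: "i < m * d" "j < m * d" by (auto simp: id_tensor_def)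
  define a where "a = i div d"
  define b where "b = j div d"
  have ab: "a < m" "b < m" using ij d unfolding a_def b_def by (auto simp: less_mult_imp_div_less)
  have cb: "\<Phi>2 (block d X a b) \<in> carrier_mat d d" by (rule c2) simp
  have blk: "block d (id_tensor m d \<Phi>2 X) a b = \<Phi>2 (block d X a b)"
  proof (rule eq_matI)
    show "dim_row (block d (id_tensor m d \<Phi>2 X) a b) = dim_row (\<Phi>2 (block d X a b))"
      using carrier_matD[OF cb] by simp
    show "dim_col (block d (id_tensor m d \<Phi>2 X) a b) = dim_col (\<Phi>2 (block d X a b))"
      using carrier_matD[OF cb] by simp
    fix r s assume "r < dim_row (\<Phi>2 (block d X a b))" "s < dim_col (\<Phi>2 (block d X a b))"
    then have rs: "r < d" "s < d" using carrier_matD[OF cb] by auto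
    show "block d (id_tensor m d \<Phi>2 X) a b $$ (r, s) = \<Phi>2 (block d X a b) $$ (r, s)"
      using rs idx_help[OF ab(1) rs(1)] idx_help[OF ab(2) rs(2)] divmod_help[OF rs(1), of a] divmod_help[OF rs(2), of b]
      by (simp add: block_def id_tensor_def)
  qed
  show "id_tensor m d (\<Phi>1 \<circ> \<Phi>2) X $$ (i, j) = id_tensor m d \<Phi>1 (id_tensor m d \<Phi>2 X) $$ (i, j)"
    using ij blk by (simp add: id_tensor_def a_def b_def)
qed

lemma smult_zero_add: "A \<in> carrier_mat d d \<Longrightarrow> (-1 :: complex) \<cdot>\<^sub>m A + A = 0\<^sub>m d d"
  by (rule eq_matI) auto

lemma channel_zero:
  assumes c: "channel n G"
  shows "G (0\<^sub>m (qdim n) (qdim n)) = 0\<^sub>m (qdim n) (qdim n)"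
proof -
  let ?Z = "0\<^sub>m (qdim n) (qdim n) :: complex mat"
  have lin: "linear_map_on (qdim n) G" using c by (simp add: channel_def)
  have Z: "?Z \<in> carrier_mat (qdim n) (qdim n)" by simp
  have "G ((-1) \<cdot>\<^sub>m ?Z + ?Z) = (-1) \<cdot>\<^sub>m G ?Z + G ?Z" using lin Z unfolding linear_map_on_def by blast
  moreover have "(-1 :: complex) \<cdot>\<^sub>m ?Z + ?Z = ?Z" by (rule smult_zero_add[OF Z])
  moreover have "(-1 :: complex) \<cdot>\<^sub>m G ?Z + G ?Z = ?Z" by (rule smult_zero_add[OF channel_carrier[OF c Z]])
  ultimately show ?thesis by simp
qed

lemma channel_comp:
  assumes c1: "channel n \<Phi>1" and c2: "channel n \<Phi>2"
  shows "channel n (\<Phi>1 \<circ> \<Phi>2)"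
proof -
  let ?d = "qdim n"
  have car: "\<And>X. X \<in> carrier_mat ?d ?d \<Longrightarrow> (\<Phi>1 \<circ> \<Phi>2) X \<in> carrier_mat ?d ?d"
    using channel_carrier[OF c1] channel_carrier[OF c2] by simp
  have zer: "\<And>X. X \<notin> carrier_mat ?d ?d \<Longrightarrow> (\<Phi>1 \<circ> \<Phi>2) X = 0\<^sub>m ?d ?d"
    using c2 channel_zero[OF c1] unfolding channel_def by simp
  have lin: "linear_map_on ?d (\<Phi>1 \<circ> \<Phi>2)"
    unfolding linear_map_on_def
  proof (intro ballI allI)
    fix X Y :: "complex mat" and c :: complex assume X: "X \<in> carrier_mat ?d ?d" and Y: "Y \<in> carrier_mat ?d ?d"
    have "\<Phi>2 (c \<cdot>\<^sub>m X + Y) = c \<cdot>\<^sub>m \<Phi>2 X + \<Phi>2 Y" using c2 X Y unfolding channel_def linear_map_on_def by blast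
    moreover have "\<Phi>1 (c \<cdot>\<^sub>m \<Phi>2 X + \<Phi>2 Y) = c \<cdot>\<^sub>m \<Phi>1 (\<Phi>2 X) + \<Phi>1 (\<Phi>2 Y)"
      using c1 channel_carrier[OF c2 X] channel_carrier[OF c2 Y] unfolding channel_def linear_map_on_def by blast
    ultimately show "(\<Phi>1 \<circ> \<Phi>2) (c \<cdot>\<^sub>m X + Y) = c \<cdot>\<^sub>m (\<Phi>1 \<circ> \<Phi>2) X + (\<Phi>1 \<circ> \<Phi>2) Y" by simp
  qed
  have cp: "completely_positive ?d (\<Phi>1 \<circ> \<Phi>2)"
    unfolding completely_positive_def
  proof (intro allI impI)
    fix m X assume m: "1 \<le> m" and p: "psd (m * ?d) X"
    have p2: "psd (m * ?d) (id_tensor m ?d \<Phi>2 X)" using c2 m p unfolding channel_def completely_positive_def by blast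
    have p1: "psd (m * ?d) (id_tensor m ?d \<Phi>1 (id_tensor m ?d \<Phi>2 X))" using c1 m p2 unfolding channel_def completely_positive_def by blast
    show "psd (m * ?d) (id_tensor m ?d (\<Phi>1 \<circ> \<Phi>2) X)"
      using p1 id_tensor_comp[of ?d \<Phi>2 m \<Phi>1 X] channel_carrier[OF c2] qdim_pos by simp
  qed
  have tp: "trace_preserving ?d (\<Phi>1 \<circ> \<Phi>2)"
    using c1 c2 channel_carrier[OF c2] unfolding channel_def trace_preserving_def by simp
  show ?thesis unfolding channel_def using car zer lin cp tp by blast
qed

lemma channel_foldr:
  "Ls \<noteq> [] \<Longrightarrow> (\<forall>G\<in>set Ls. channel n G) \<Longrightarrow> channel n (foldr (\<circ>) Ls id)"
proof (induction Ls)
  case Nil then show ?case by simp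
next
  case (Cons G Ls)
  show ?case
  proof (cases "Ls = []")
    case True then show ?thesis using Cons.prems by simp
  next
    case False
    have ih: "channel n (foldr (\<circ>) Ls id)" by (rule Cons.IH[OF False]) (use Cons.prems in simp)
    have ch: "channel n (G \<circ> foldr (\<circ>) Ls id)" by (rule channel_comp[OF _ ih]) (use Cons.prems in simp)
    have eq: "foldr (\<circ>) (G # Ls) id = G \<circ> foldr (\<circ>) Ls id" by (simp add: fun_eq_iff)
    show ?thesis unfolding eq by (rule ch)
  qed
qed

lemma comps_channel:
  assumes "\<forall>G\<in>Ofr. channel n G" "channel n \<Psi>" "\<Phi> \<in> comps_k Ofr \<Psi> k"
  shows "channel n \<Phi>"
  using assms channel_foldr unfolding comps_k_def by blast


type_synonym cmap = "complex mat \<Rightarrow> complex mat"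

definition msum :: "(real \<times> cmap) list \<Rightarrow> complex mat \<Rightarrow> nat \<times> nat \<Rightarrow> complex" where
  "msum L X rs = sum_list (map (\<lambda>p. complex_of_real (fst p) * (snd p X $$ rs)) L)"

definition rep :: "nat \<Rightarrow> cmap set \<Rightarrow> real \<Rightarrow> cmap \<Rightarrow> bool" where
  "rep n Ofr c \<Phi> \<longleftrightarrow> (\<exists>L. set (map snd L) \<subseteq> Ofr \<and> sum_list (map fst L) = 1 \<and>
     sum_list (map (\<lambda>p. \<bar>fst p\<bar>) L) \<le> c \<and>
     (\<forall>X\<in>carrier_mat (qdim n) (qdim n). \<Phi> X \<in> carrier_mat (qdim n) (qdim n) \<and>
        (\<forall>r<qdim n. \<forall>s<qdim n. \<Phi> X $$ (r, s) = msum L X (r, s))))"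

lemma msum_Nil[simp]: "msum [] X rs = 0" by (simp add: msum_def)
lemma msum_Cons[simp]: "msum (p # L) X rs = complex_of_real (fst p) * (snd p X $$ rs) + msum L X rs"
  by (simp add: msum_def)
lemma msum_append[simp]: "msum (L1 @ L2) X rs = msum L1 X rs + msum L2 X rs"
  by (simp add: msum_def)

lemma msum_scale: "msum (map (\<lambda>p. (a * fst p, g p)) L) X rs = complex_of_real a * msum (map (\<lambda>p. (fst p, g p)) L) X rs"
  by (induction L) (simp_all add: distrib_left mult_ac)

lemma map_id_pair: "map (\<lambda>p. (fst p, snd p)) L = L" by (induction L) auto

lemma rep_mono: "rep n Ofr c \<Phi> \<Longrightarrow> c \<le> c' \<Longrightarrow> rep n Ofr c' \<Phi>"
  unfolding rep_def by (meson order_trans)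

lemma rep_single: "G \<in> Ofr \<Longrightarrow> channel n G \<Longrightarrow> rep n Ofr 1 G"
  unfolding rep_def
  by (rule exI[of _ "[(1, G)]"]) (auto simp: channel_carrier)

lemma lin_expand:
  assumes c: "channel n G"
  shows "(\<forall>p\<in>set L. snd p X \<in> carrier_mat (qdim n) (qdim n)) \<Longrightarrow> M \<in> carrier_mat (qdim n) (qdim n) \<Longrightarrow>
    (\<forall>r<qdim n. \<forall>s<qdim n. M $$ (r, s) = msum L X (r, s)) \<Longrightarrow> r < qdim n \<Longrightarrow> s < qdim n \<Longrightarrow>
    G M $$ (r, s) = msum (map (\<lambda>p. (fst p, G \<circ> snd p)) L) X (r, s)"
proof (induction L arbitrary: M)
  case Nil
  have "M = 0\<^sub>m (qdim n) (qdim n)" by (rule eq_matI) (use Nil in auto)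
  then show ?case using channel_zero[OF c] Nil by simp
next
  case (Cons p L)
  let ?d = "qdim n"
  define M' where "M' = mat ?d ?d (\<lambda>rs. msum L X rs)"
  have M'c: "M' \<in> carrier_mat ?d ?d" by (simp add: M'_def)
  have pX: "snd p X \<in> carrier_mat ?d ?d" using Cons.prems by simp
  have M: "M = complex_of_real (fst p) \<cdot>\<^sub>m snd p X + M'"
    by (rule eq_matI) (use Cons.prems pX in \<open>auto simp: M'_def\<close>)
  have "G M = complex_of_real (fst p) \<cdot>\<^sub>m G (snd p X) + G M'"
    using c pX M'c unfolding M channel_def linear_map_on_def by blast
  then have "G M $$ (r, s) = complex_of_real (fst p) * G (snd p X) $$ (r, s) + G M' $$ (r, s)"
    using channel_carrier[OF c pX] channel_carrier[OF c M'c] Cons.prems by simp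
  also have "G M' $$ (r, s) = msum (map (\<lambda>p. (fst p, G \<circ> snd p)) L) X (r, s)"
    by (rule Cons.IH) (use Cons.prems M'c in \<open>auto simp: M'_def\<close>)
  finally show ?case by (simp add: o_def)
qed

lemma msum_concat:
  "msum (concat (map (\<lambda>q. map (\<lambda>p. (fst q * fst p, snd q \<circ> snd p)) L2) L1)) X rs
   = sum_list (map (\<lambda>q. complex_of_real (fst q) * msum (map (\<lambda>p. (fst p, snd q \<circ> snd p)) L2) X rs) L1)"
  by (induction L1) (simp_all add: msum_scale)

lemma sum_fst_concat:
  "sum_list (map fst (concat (map (\<lambda>q. map (\<lambda>p. (fst q * fst p, snd q \<circ> snd p)) L2) L1)))
   = sum_list (map fst L1) * sum_list (map fst (L2 :: (real \<times> cmap) list))"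
  by (induction L1) (simp_all add: sum_list_const_mult o_def distrib_right)

lemma sum_abs_concat:
  "sum_list (map (\<lambda>p. \<bar>fst p\<bar>) (concat (map (\<lambda>q. map (\<lambda>p. (fst q * fst p, snd q \<circ> snd p)) L2) L1)))
   = sum_list (map (\<lambda>p. \<bar>fst p\<bar>) L1) * sum_list (map (\<lambda>p. \<bar>fst p\<bar>) (L2 :: (real \<times> cmap) list))"
  by (induction L1) (simp_all add: sum_list_const_mult o_def distrib_right abs_mult)

lemma sum_abs_nonneg: "0 \<le> sum_list (map (\<lambda>p. \<bar>fst p\<bar>) (L :: (real \<times> cmap) list))"
  by (induction L) auto

lemma rep_comp:
  assumes ch: "\<forall>G\<in>Ofr. channel n G" and cl: "closed_under_comp Ofr"
    and r1: "rep n Ofr c1 \<Phi>1" and r2: "rep n Ofr c2 \<Phi>2"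
  shows "rep n Ofr (c1 * c2) (\<Phi>1 \<circ> \<Phi>2)"
proof -
  let ?d = "qdim n"
  obtain L1 where L1: "set (map snd L1) \<subseteq> Ofr" "sum_list (map fst L1) = 1" "sum_list (map (\<lambda>p. \<bar>fst p\<bar>) L1) \<le> c1"
    "\<forall>X\<in>carrier_mat ?d ?d. \<Phi>1 X \<in> carrier_mat ?d ?d \<and> (\<forall>r<?d. \<forall>s<?d. \<Phi>1 X $$ (r, s) = msum L1 X (r, s))"
    using r1 unfolding rep_def by blast
  obtain L2 where L2: "set (map snd L2) \<subseteq> Ofr" "sum_list (map fst L2) = 1" "sum_list (map (\<lambda>p. \<bar>fst p\<bar>) L2) \<le> c2"
    "\<forall>X\<in>carrier_mat ?d ?d. \<Phi>2 X \<in> carrier_mat ?d ?d \<and> (\<forall>r<?d. \<forall>s<?d. \<Phi>2 X $$ (r, s) = msum L2 X (r, s))"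
    using r2 unfolding rep_def by blast
  define L where "L = concat (map (\<lambda>q. map (\<lambda>p. (fst q * fst p, snd q \<circ> snd p)) L2) L1)"
  show ?thesis unfolding rep_def
  proof (intro exI[of _ L] conjI ballI allI impI)
    show "set (map snd L) \<subseteq> Ofr"
    proof
      fix G assume "G \<in> set (map snd L)"
      then obtain q p where qp: "q \<in> set L1" "p \<in> set L2" "G = snd q \<circ> snd p" by (auto simp: L_def)
      have "snd q \<in> Ofr" using L1(1) qp(1) by auto
      moreover have "snd p \<in> Ofr" using L2(1) qp(2) by auto
      ultimately show "G \<in> Ofr" using cl qp(3) unfolding closed_under_comp_def by blast
    qed
    show "sum_list (map fst L) = 1" unfolding L_def sum_fst_concat using L1(2) L2(2) by simp
    have "sum_list (map (\<lambda>p. \<bar>fst p\<bar>) L) = sum_list (map (\<lambda>p. \<bar>fst p\<bar>) L1) * sum_list (map (\<lambda>p. \<bar>fst p\<bar>) L2)"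
      unfolding L_def by (rule sum_abs_concat)
    also have "\<dots> \<le> c1 * c2"
      using L1(3) L2(3) sum_abs_nonneg[of L1] sum_abs_nonneg[of L2] by (intro mult_mono) auto
    finally show "sum_list (map (\<lambda>p. \<bar>fst p\<bar>) L) \<le> c1 * c2" .
    fix X :: "complex mat" assume X: "X \<in> carrier_mat ?d ?d"
    have X2: "\<Phi>2 X \<in> carrier_mat ?d ?d" using L2(4) X by blast
    show "(\<Phi>1 \<circ> \<Phi>2) X \<in> carrier_mat ?d ?d" using L1(4) X2 by auto
    fix r s assume r: "r < ?d" and s: "s < ?d"
    have "(\<Phi>1 \<circ> \<Phi>2) X $$ (r, s) = msum L1 (\<Phi>2 X) (r, s)" using L1(4) X2 r s by simp
    also have "\<dots> = sum_list (map (\<lambda>q. complex_of_real (fst q) * (snd q (\<Phi>2 X) $$ (r, s))) L1)"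
      by (simp add: msum_def)
    also have "\<dots> = sum_list (map (\<lambda>q. complex_of_real (fst q) * msum (map (\<lambda>p. (fst p, snd q \<circ> snd p)) L2) X (r, s)) L1)"
    proof (rule arg_cong[where f=sum_list], rule map_cong[OF refl])
      fix q assume q: "q \<in> set L1"
      have cq: "channel n (snd q)" using q L1(1) ch by auto
      have "snd q (\<Phi>2 X) $$ (r, s) = msum (map (\<lambda>p. (fst p, snd q \<circ> snd p)) L2) X (r, s)"
      proof (rule lin_expand[OF cq])
        show "\<forall>p\<in>set L2. snd p X \<in> carrier_mat ?d ?d"
        proof
          fix p assume "p \<in> set L2"
          then have "snd p \<in> Ofr" using L2(1) by auto
          then show "snd p X \<in> carrier_mat ?d ?d" using ch X channel_carrier by blast
        qed
        show "\<Phi>2 X \<in> carrier_mat ?d ?d" by (rule X2)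
        show "\<forall>r<?d. \<forall>s<?d. \<Phi>2 X $$ (r, s) = msum L2 X (r, s)" using L2(4) X by blast
      qed (use r s in auto)?
      then show "complex_of_real (fst q) * (snd q (\<Phi>2 X) $$ (r, s)) =
          complex_of_real (fst q) * msum (map (\<lambda>p. (fst p, snd q \<circ> snd p)) L2) X (r, s)" by simp
    qed
    also have "\<dots> = msum L X (r, s)" unfolding L_def by (rule msum_concat[symmetric])
    finally show "(\<Phi>1 \<circ> \<Phi>2) X $$ (r, s) = msum L X (r, s)" .
  qed
qed

lemma inconv_list:
  assumes "in_conv n Ofr F"
  shows "\<exists>L. set (map snd L) \<subseteq> Ofr \<and> (\<forall>p\<in>set L. fst p \<ge> 0) \<and> sum_list (map fst L) = 1 \<and>
     (\<forall>X\<in>carrier_mat (qdim n) (qdim n). \<forall>r<qdim n. \<forall>s<qdim n. F X $$ (r, s) = msum L X (r, s))"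
proof -
  obtain N :: nat and w :: "nat \<Rightarrow> real" and G :: "nat \<Rightarrow> cmap" where h: "\<forall>i<N. G i \<in> Ofr \<and> w i \<ge> 0" "(\<Sum>i<N. w i) = 1"
    "\<forall>X \<in> carrier_mat (qdim n) (qdim n). F X = mat (qdim n) (qdim n) (\<lambda>(r, c). \<Sum>i<N. complex_of_real (w i) * (G i X $$ (r, c)))"
    using assms[unfolded in_conv_def] by blast
  define L where "L = map (\<lambda>i. (w i, G i)) [0..<N]"
  show ?thesis
  proof (intro exI[of _ L] conjI ballI allI impI)
    show "set (map snd L) \<subseteq> Ofr" using h(1) by (auto simp: L_def)
    show "\<And>p. p \<in> set L \<Longrightarrow> fst p \<ge> 0" using h(1) by (auto simp: L_def)
    show "sum_list (map fst L) = 1" using h(2)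
      by (simp add: L_def o_def interv_sum_list_conv_sum_set_nat atLeast0LessThan)
    fix X :: "complex mat" and r s assume X: "X \<in> carrier_mat (qdim n) (qdim n)" and r: "r < qdim n" and s: "s < qdim n"
    have "F X $$ (r, s) = (\<Sum>i<N. complex_of_real (w i) * (G i X $$ (r, s)))" using h(3) X r s by simp
    also have "\<dots> = msum L X (r, s)"
      by (simp add: L_def msum_def o_def interv_sum_list_conv_sum_set_nat atLeast0LessThan)
    finally show "F X $$ (r, s) = msum L X (r, s)" .
  qed
qed

lemma sum_abs_scale: "sum_list (map (\<lambda>p. \<bar>fst p\<bar>) (map (\<lambda>p. (a * fst p, snd p)) (L :: (real \<times> cmap) list)))
   = \<bar>a\<bar> * sum_list (map (\<lambda>p. \<bar>fst p\<bar>) L)"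
  by (induction L) (simp_all add: abs_mult distrib_left)

lemma sum_fst_scale: "sum_list (map fst (map (\<lambda>p. (a * fst p, snd p)) (L :: (real \<times> cmap) list)))
   = a * sum_list (map fst L)"
  by (induction L) (simp_all add: distrib_left)

lemma sum_abs_pos: "\<forall>p\<in>set L. fst p \<ge> 0 \<Longrightarrow> sum_list (map (\<lambda>p. \<bar>fst p\<bar>) (L :: (real \<times> cmap) list)) = sum_list (map fst L)"
  by (induction L) auto

lemma rep_robust:
  assumes car: "\<forall>X\<in>carrier_mat (qdim n) (qdim n). \<Phi> X \<in> carrier_mat (qdim n) (qdim n)"
    and l: "l \<ge> 0" and i1: "in_conv n Ofr \<Phi>'" and i2: "in_conv n Ofr (mix n \<Phi> l \<Phi>')"
  shows "rep n Ofr (1 + 2 * l) \<Phi>"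
proof -
  let ?d = "qdim n"
  obtain LA where LA: "set (map snd LA) \<subseteq> Ofr" "\<forall>p\<in>set LA. fst p \<ge> 0" "sum_list (map fst LA) = 1"
    "\<forall>X\<in>carrier_mat ?d ?d. \<forall>r<?d. \<forall>s<?d. mix n \<Phi> l \<Phi>' X $$ (r, s) = msum LA X (r, s)"
    using inconv_list[OF i2] by blast
  obtain LB where LB: "set (map snd LB) \<subseteq> Ofr" "\<forall>p\<in>set LB. fst p \<ge> 0" "sum_list (map fst LB) = 1"
    "\<forall>X\<in>carrier_mat ?d ?d. \<forall>r<?d. \<forall>s<?d. \<Phi>' X $$ (r, s) = msum LB X (r, s)"
    using inconv_list[OF i1] by blast
  define L where "L = map (\<lambda>p. ((1 + l) * fst p, snd p)) LA @ map (\<lambda>p. (- l * fst p, snd p)) LB"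
  show ?thesis unfolding rep_def
  proof (intro exI[of _ L] conjI ballI allI impI)
    show "set (map snd L) \<subseteq> Ofr" using LA(1) LB(1) by (auto simp: L_def)
    show "sum_list (map fst L) = 1"
      by (simp only: L_def map_append sum_list_append sum_fst_scale LA(3) LB(3)) simp
    show "sum_list (map (\<lambda>p. \<bar>fst p\<bar>) L) \<le> 1 + 2 * l"
      by (simp only: L_def map_append sum_list_append sum_abs_scale sum_abs_pos[OF LA(2)] sum_abs_pos[OF LB(2)] LA(3) LB(3)) (use l in simp)
    fix X :: "complex mat" assume X: "X \<in> carrier_mat ?d ?d"
    show "\<Phi> X \<in> carrier_mat ?d ?d" using car X by blast
    fix r s assume r: "r < ?d" and s: "s < ?d"
    have "mix n \<Phi> l \<Phi>' X $$ (r, s) = (\<Phi> X $$ (r, s) + complex_of_real l * \<Phi>' X $$ (r, s)) / complex_of_real (1 + l)"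
      using r s by (simp add: mix_def)
    then have "\<Phi> X $$ (r, s) = complex_of_real (1 + l) * msum LA X (r, s) - complex_of_real l * msum LB X (r, s)"
      using LA(4) LB(4) X r s l
      by (simp add: field_simps del: of_real_add)
    also have "\<dots> = msum L X (r, s)"
      unfolding L_def msum_append msum_scale[of "1 + l" snd] msum_scale[of "- l" snd] map_id_pair by simp
    finally show "\<Phi> X $$ (r, s) = msum L X (r, s)" .
  qed
qed


lemma rep_foldr:
  assumes ch: "\<forall>G\<in>Ofr. channel n G" and cl: "closed_under_comp Ofr" and rP: "rep n Ofr c\<Psi> \<Psi>"
    and c1: "1 \<le> c\<Psi>"
  shows "Ls \<noteq> [] \<Longrightarrow> set Ls \<subseteq> Ofr \<union> {\<Psi>} \<Longrightarrow>
    rep n Ofr (c\<Psi> ^ length (filter (\<lambda>G. G = \<Psi>) Ls)) (foldr (\<circ>) Ls id)"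
proof (induction Ls)
  case Nil then show ?case by simp
next
  case (Cons G Ls)
  have rG: "rep n Ofr (if G = \<Psi> then c\<Psi> else 1) G"
  proof (cases "G = \<Psi>")
    case True then show ?thesis using rP by simp
  next
    case False
    then have "G \<in> Ofr" using Cons.prems by auto
    then show ?thesis using False rep_single ch by auto
  qed
  have cnt: "c\<Psi> ^ length (filter (\<lambda>G. G = \<Psi>) (G # Ls)) = (if G = \<Psi> then c\<Psi> else 1) * c\<Psi> ^ length (filter (\<lambda>G. G = \<Psi>) Ls)"
    by simp
  show ?case
  proof (cases "Ls = []")
    case True
    have eq: "foldr (\<circ>) (G # Ls) id = G" using True by (simp add: fun_eq_iff)
    show ?thesis unfolding eq cnt using rG True by simp
  next
    case False
    have ih: "rep n Ofr (c\<Psi> ^ length (filter (\<lambda>G. G = \<Psi>) Ls)) (foldr (\<circ>) Ls id)"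
      by (rule Cons.IH[OF False]) (use Cons.prems in auto)
    have eq: "foldr (\<circ>) (G # Ls) id = G \<circ> foldr (\<circ>) Ls id" by (simp add: fun_eq_iff)
    show ?thesis unfolding eq cnt by (rule rep_comp[OF ch cl rG ih])
  qed
qed

lemma comps_rep:
  assumes ch: "\<forall>G\<in>Ofr. channel n G" and cl: "closed_under_comp Ofr" and rP: "rep n Ofr c\<Psi> \<Psi>"
    and c1: "1 \<le> c\<Psi>" and \<Phi>: "\<Phi> \<in> comps_k Ofr \<Psi> k"
  shows "rep n Ofr (c\<Psi> ^ k) \<Phi>"
proof -
  obtain Ls where Ls: "\<Phi> = foldr (\<circ>) Ls id" "Ls \<noteq> []" "set Ls \<subseteq> Ofr \<union> {\<Psi>}" "length (filter (\<lambda>G. G = \<Psi>) Ls) \<le> k"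
    using \<Phi> unfolding comps_k_def by blast
  have "rep n Ofr (c\<Psi> ^ length (filter (\<lambda>G. G = \<Psi>) Ls)) \<Phi>"
    unfolding Ls(1) by (rule rep_foldr[OF ch cl rP c1 Ls(2,3)])
  then show ?thesis by (rule rep_mono) (rule power_increasing[OF Ls(4) c1])
qed

lemma Re_msum: "Re (msum L X rs) = sum_list (map (\<lambda>p. fst p * Re (snd p X $$ rs)) L)"
  by (induction L) auto

lemma rep_f:
  assumes ch: "\<forall>G\<in>Ofr. channel n G" and r: "rep n Ofr c \<Phi>"
  shows "\<exists>L. set (map snd L) \<subseteq> Ofr \<and> sum_list (map fst L) = 1 \<and> sum_list (map (\<lambda>p. \<bar>fst p\<bar>) L) \<le> c \<and>
    (\<forall>x<qdim n. \<forall>y<qdim n. f_chan n \<Phi> (x, y) = sum_list (map (\<lambda>p. fst p * f_chan n (snd p) (x, y)) L))"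
proof -
  obtain L where L: "set (map snd L) \<subseteq> Ofr" "sum_list (map fst L) = 1" "sum_list (map (\<lambda>p. \<bar>fst p\<bar>) L) \<le> c"
    "\<forall>X\<in>carrier_mat (qdim n) (qdim n). \<Phi> X \<in> carrier_mat (qdim n) (qdim n) \<and>
        (\<forall>r<qdim n. \<forall>s<qdim n. \<Phi> X $$ (r, s) = msum L X (r, s))"
    using r unfolding rep_def by blast
  show ?thesis
  proof (intro exI[of _ L] conjI allI impI L(1-3))
    fix x y assume x: "x < qdim n" and y: "y < qdim n"
    have P: "basis_proj n x \<in> carrier_mat (qdim n) (qdim n)" by simp
    have "f_chan n \<Phi> (x, y) = Re (\<Phi> (basis_proj n x) $$ (y, y))"
      unfolding f_chan_def using mtrace_mult_proj[of "\<Phi> (basis_proj n x)" n y] L(4) P y by simp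
    also have "\<dots> = Re (msum L (basis_proj n x) (y, y))" using L(4) P y by simp
    also have "\<dots> = sum_list (map (\<lambda>p. fst p * f_chan n (snd p) (x, y)) L)"
      unfolding Re_msum
    proof (rule arg_cong[where f=sum_list], rule map_cong[OF refl])
      fix p assume "p \<in> set L"
      then have "channel n (snd p)" using L(1) ch by auto
      then show "fst p * Re (snd p (basis_proj n x) $$ (y, y)) = fst p * f_chan n (snd p) (x, y)"
        using f_chan_diag[of n "snd p" x y] x y by simp
    qed
    finally show "f_chan n \<Phi> (x, y) = sum_list (map (\<lambda>p. fst p * f_chan n (snd p) (x, y)) L)" .
  qed
qed


lemma sum_list_sum_swap:
  fixes g :: "nat \<Rightarrow> 'b \<Rightarrow> real"
  shows "(\<Sum>i\<in>I. sum_list (map (g i) L)) = sum_list (map (\<lambda>p. \<Sum>i\<in>I. g i p) L)"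
  by (induction L) (simp_all add: sum.distrib)

lemma list_bound:
  fixes L :: "(real \<times> 'b) list"
  assumes "\<forall>p\<in>set L. X p \<le> B \<and> - X p \<le> A"
  shows "sum_list (map (\<lambda>p. fst p * X p) L) \<le> sum_list (map (\<lambda>p. max (fst p) 0) L) * B + sum_list (map (\<lambda>p. max (- fst p) 0) L) * A"
  using assms
proof (induction L)
  case Nil then show ?case by simp
next
  case (Cons p L)
  have h: "X p \<le> B" "- X p \<le> A" using Cons.prems by auto
  have "fst p * X p \<le> max (fst p) 0 * B + max (- fst p) 0 * A"
  proof (cases "fst p \<ge> 0")
    case True
    then have "fst p * X p \<le> fst p * B" using h by (intro mult_left_mono) auto
    then show ?thesis using True by simp
  next
    case False
    then have "fst p * X p = (- fst p) * (- X p)" by simp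
    also have "\<dots> \<le> (- fst p) * A" using h False by (intro mult_left_mono) auto
    finally show ?thesis using False by simp
  qed
  moreover have "sum_list (map (\<lambda>p. fst p * X p) L) \<le> sum_list (map (\<lambda>p. max (fst p) 0) L) * B + sum_list (map (\<lambda>p. max (- fst p) 0) L) * A"
    using Cons by auto
  ultimately show ?case by (simp add: distrib_right)
qed

lemma sum_list_neg: "sum_list (map (\<lambda>p. - g p) L) = - sum_list (map g L :: real list)"
  by (induction L) auto

lemma PN_diff: "sum_list (map (\<lambda>p. max (fst p) 0) (L :: (real \<times> 'b) list)) - sum_list (map (\<lambda>p. max (- fst p) 0) L) = sum_list (map fst L)"
  by (induction L) (auto simp: max_def)

lemma PN_sum: "sum_list (map (\<lambda>p. max (fst p) 0) (L :: (real \<times> 'b) list)) + sum_list (map (\<lambda>p. max (- fst p) 0) L) = sum_list (map (\<lambda>p. \<bar>fst p\<bar>) L)"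
  by (induction L) (auto simp: max_def)

lemma N_nonneg: "0 \<le> sum_list (map (\<lambda>p. max (- fst p) 0) (L :: (real \<times> 'b) list))"
  by (induction L) auto

lemma alg_bound:
  fixes P N A B c :: real
  assumes "P - N = 1" "P + N \<le> c" "0 \<le> N" "0 \<le> A + B"
  shows "P * B + N * A \<le> B + (c - 1) / 2 * (A + B)"
proof -
  have P: "P = 1 + N" using assms(1) by simp
  have "P * B + N * A = B + N * (A + B)" unfolding P by (simp add: algebra_simps)
  also have "N * (A + B) \<le> (c - 1) / 2 * (A + B)" using assms by (intro mult_right_mono) auto
  finally show ?thesis by simp
qed

context
  fixes D :: "'a pmf" and F :: "('a \<Rightarrow> real) set" and m :: nat
  assumes fin: "finite (set_pmf D)" and Fne: "F \<noteq> {}"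
    and FbH: "\<forall>g\<in>F. \<forall>z\<in>set_pmf D. 0 \<le> g z \<and> g z \<le> 1"
    and mpos: "m > 0"
begin

lemma AB_nonneg:
  assumes s: "\<sigma> \<in> sign_vectors m" and S: "length S = m" "set S \<subseteq> set_pmf D"
  shows "0 \<le> rsup m F \<sigma> S + rsup m F (map uminus \<sigma>) S"
proof -
  obtain f0 where f0: "f0 \<in> F" using Fne by auto
  have ls: "length \<sigma> = m" using s by (simp add: sign_vectors_def)
  have a: "(\<Sum>i<m. \<sigma> ! i * f0 (S ! i)) / real m \<le> rsup m F \<sigma> S"
    unfolding rsup_def
    by (rule bdd_Sup_upper[OF _ f0], rule term_b[where D=D and G=F and m=m, OF fin Fne FbH mpos s]) (use S in auto)
  have b: "(\<Sum>i<m. map uminus \<sigma> ! i * f0 (S ! i)) / real m \<le> rsup m F (map uminus \<sigma>) S"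
    unfolding rsup_def
    by (rule bdd_Sup_upper[OF _ f0], rule term_b[where D=D and G=F and m=m, OF fin Fne FbH mpos sign_neg_mem[OF s]]) (use S in auto)
  have "(\<Sum>i<m. map uminus \<sigma> ! i * f0 (S ! i)) = - (\<Sum>i<m. \<sigma> ! i * f0 (S ! i))"
    using ls by (simp add: sum_negf[symmetric])
  then show ?thesis using a b by (simp add: minus_divide_left[symmetric])
qed

lemma radm_nonneg:
  assumes S: "length S = m" "set S \<subseteq> set_pmf D"
  shows "0 \<le> radm m F S"
proof -
  have "2 * (\<Sum>\<sigma>\<in>sign_vectors m. rsup m F \<sigma> S) = (\<Sum>\<sigma>\<in>sign_vectors m. rsup m F \<sigma> S + rsup m F (map uminus \<sigma>) S)"
    by (simp add: sum.distrib sum_sign_neg[of "\<lambda>\<sigma>. rsup m F \<sigma> S"])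
  also have "\<dots> \<ge> 0" by (intro sum_nonneg AB_nonneg[OF _ S])
  finally show ?thesis unfolding radm_def by simp
qed

lemma rad_compare:
  assumes Cne: "C \<noteq> {}"
    and Crep: "\<forall>h\<in>C. \<exists>L :: (real \<times> ('a \<Rightarrow> real)) list. set (map snd L) \<subseteq> F \<and> sum_list (map fst L) = 1 \<and>
        sum_list (map (\<lambda>p. \<bar>fst p\<bar>) L) \<le> c \<and>
        (\<forall>z\<in>set_pmf D. h z = 1 - sum_list (map (\<lambda>p. fst p * snd p z) L))"
    and S: "length S = m" "set S \<subseteq> set_pmf D"
  shows "radm m C S \<le> c * radm m F S"
proof -
  define s where "s \<sigma> = (\<Sum>i<m. \<sigma> ! i) / real m" for \<sigma> :: "real list"
  define A where "A \<sigma> = rsup m F \<sigma> S" for \<sigma>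
  define B where "B \<sigma> = rsup m F (map uminus \<sigma>) S" for \<sigma>
  have Si: "S ! i \<in> set_pmf D" if "i < m" for i using S that nth_mem by blast
  have key: "rsup m C \<sigma> S \<le> s \<sigma> + B \<sigma> + (c - 1) / 2 * (A \<sigma> + B \<sigma>)" if s: "\<sigma> \<in> sign_vectors m" for \<sigma>
    unfolding rsup_def
  proof (rule cSUP_least[OF Cne])
    fix h assume h: "h \<in> C"
    obtain L :: "(real \<times> ('a \<Rightarrow> real)) list" where L: "set (map snd L) \<subseteq> F" "sum_list (map fst L) = 1"
      "sum_list (map (\<lambda>p. \<bar>fst p\<bar>) L) \<le> c" "\<forall>z\<in>set_pmf D. h z = 1 - sum_list (map (\<lambda>p. fst p * snd p z) L)"
      using Crep h by blast
    define X where "X p = (\<Sum>i<m. map uminus \<sigma> ! i * snd p (S ! i)) / real m" for p :: "real \<times> ('a \<Rightarrow> real)"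
    have ls: "length \<sigma> = m" using s by (simp add: sign_vectors_def)
    have "(\<Sum>i<m. \<sigma> ! i * h (S ! i)) = (\<Sum>i<m. \<sigma> ! i - sum_list (map (\<lambda>p. \<sigma> ! i * (fst p * snd p (S ! i))) L))"
      by (intro sum.cong refl) (simp add: L(4) Si right_diff_distrib sum_list_const_mult)
    also have "\<dots> = (\<Sum>i<m. \<sigma> ! i) - sum_list (map (\<lambda>p. \<Sum>i<m. \<sigma> ! i * (fst p * snd p (S ! i))) L)"
      by (simp add: sum_subtractf sum_list_sum_swap)
    also have "\<dots> = (\<Sum>i<m. \<sigma> ! i) + sum_list (map (\<lambda>p. fst p * (X p * real m)) L)"
    proof -
      have "sum_list (map (\<lambda>p. \<Sum>i<m. \<sigma> ! i * (fst p * snd p (S ! i))) L) = - sum_list (map (\<lambda>p. fst p * (X p * real m)) L)"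
        unfolding sum_list_neg[symmetric]
      proof (rule arg_cong[where f=sum_list], rule map_cong[OF refl])
        fix p :: "real \<times> ('a \<Rightarrow> real)"
        have "X p * real m = (\<Sum>i<m. map uminus \<sigma> ! i * snd p (S ! i))" using mpos by (simp add: X_def)
        also have "\<dots> = - (\<Sum>i<m. \<sigma> ! i * snd p (S ! i))" using ls by (simp add: sum_negf[symmetric])
        finally show "(\<Sum>i<m. \<sigma> ! i * (fst p * snd p (S ! i))) = - (fst p * (X p * real m))"
          by (simp add: sum_distrib_left mult_ac)
      qed
      then show ?thesis by simp
    qed
    also have "sum_list (map (\<lambda>p. fst p * (X p * real m)) L) = real m * sum_list (map (\<lambda>p. fst p * X p) L)"
      by (simp add: sum_list_const_mult[symmetric] mult_ac)
    finally have e: "(\<Sum>i<m. \<sigma> ! i * h (S ! i)) / real m = s \<sigma> + sum_list (map (\<lambda>p. fst p * X p) L)"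
      using mpos by (simp add: s_def add_divide_distrib)
    have XB: "\<forall>p\<in>set L. X p \<le> B \<sigma> \<and> - X p \<le> A \<sigma>"
    proof
      fix p assume p: "p \<in> set L"
      have f: "snd p \<in> F" using p L(1) by auto
      have "X p \<le> B \<sigma>" unfolding X_def B_def rsup_def
        by (rule bdd_Sup_upper[OF _ f], rule term_b[where D=D and G=F and m=m, OF fin Fne FbH mpos sign_neg_mem[OF s]]) (use S in auto)
      moreover have "- X p \<le> A \<sigma>"
      proof -
        have "- X p = (\<Sum>i<m. \<sigma> ! i * snd p (S ! i)) / real m"
          using ls by (simp add: X_def sum_negf)
        also have "\<dots> \<le> A \<sigma>" unfolding A_def rsup_def
          by (rule bdd_Sup_upper[OF _ f], rule term_b[where D=D and G=F and m=m, OF fin Fne FbH mpos s]) (use S in auto)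
        finally show ?thesis .
      qed
      ultimately show "X p \<le> B \<sigma> \<and> - X p \<le> A \<sigma>" by simp
    qed
    have "sum_list (map (\<lambda>p. fst p * X p) L) \<le> sum_list (map (\<lambda>p. max (fst p) 0) L) * B \<sigma> + sum_list (map (\<lambda>p. max (- fst p) 0) L) * A \<sigma>"
      by (rule list_bound[OF XB])
    also have "\<dots> \<le> B \<sigma> + (c - 1) / 2 * (A \<sigma> + B \<sigma>)"
    proof (rule alg_bound)
      show "sum_list (map (\<lambda>p. max (fst p) 0) L) - sum_list (map (\<lambda>p. max (- fst p) 0) L) = 1" using PN_diff[of L] L(2) by linarith
      show "sum_list (map (\<lambda>p. max (fst p) 0) L) + sum_list (map (\<lambda>p. max (- fst p) 0) L) \<le> c" using PN_sum[of L] L(3) by linarith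
      show "0 \<le> sum_list (map (\<lambda>p. max (- fst p) 0) L)" by (rule N_nonneg)
      show "0 \<le> A \<sigma> + B \<sigma>" unfolding A_def B_def by (rule AB_nonneg[OF s S])
    qed
    finally show "(\<Sum>i<m. \<sigma> ! i * h (S ! i)) / real m \<le> s \<sigma> + B \<sigma> + (c - 1) / 2 * (A \<sigma> + B \<sigma>)"
      using e by simp
  qed
  have s0: "(\<Sum>\<sigma>\<in>sign_vectors m. s \<sigma>) = 0"
  proof -
    have "(\<Sum>\<sigma>\<in>sign_vectors m. s (map uminus \<sigma>)) = - (\<Sum>\<sigma>\<in>sign_vectors m. s \<sigma>)"
      unfolding sum_negf[symmetric]
    proof (rule sum.cong[OF refl])
      fix \<sigma> assume "\<sigma> \<in> sign_vectors m"
      then have "length \<sigma> = m" by (simp add: sign_vectors_def)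
      then show "s (map uminus \<sigma>) = - s \<sigma>" by (simp add: s_def sum_negf)
    qed
    then show ?thesis using sum_sign_neg[of s m] by simp
  qed
  have BA: "(\<Sum>\<sigma>\<in>sign_vectors m. B \<sigma>) = (\<Sum>\<sigma>\<in>sign_vectors m. A \<sigma>)"
    unfolding A_def B_def by (rule sum_sign_neg)
  have "(\<Sum>\<sigma>\<in>sign_vectors m. rsup m C \<sigma> S) \<le> (\<Sum>\<sigma>\<in>sign_vectors m. s \<sigma> + B \<sigma> + (c - 1) / 2 * (A \<sigma> + B \<sigma>))"
    by (intro sum_mono key)
  also have "\<dots> = (\<Sum>\<sigma>\<in>sign_vectors m. s \<sigma>) + (\<Sum>\<sigma>\<in>sign_vectors m. B \<sigma>) + (c - 1) / 2 * ((\<Sum>\<sigma>\<in>sign_vectors m. A \<sigma>) + (\<Sum>\<sigma>\<in>sign_vectors m. B \<sigma>))"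
    by (simp only: sum.distrib sum_distrib_left[symmetric])
  also have "\<dots> = c * (\<Sum>\<sigma>\<in>sign_vectors m. A \<sigma>)" unfolding s0 BA by (simp add: field_simps)
  finally have fi: "(\<Sum>\<sigma>\<in>sign_vectors m. rsup m C \<sigma> S) \<le> c * (\<Sum>\<sigma>\<in>sign_vectors m. A \<sigma>)" .
  have "(\<Sum>\<sigma>\<in>sign_vectors m. rsup m C \<sigma> S) / 2 ^ m \<le> c * (\<Sum>\<sigma>\<in>sign_vectors m. A \<sigma>) / 2 ^ m"
    by (rule divide_right_mono[OF fi]) simp
  then show ?thesis unfolding radm_def A_def by simp
qed

end


lemma rob_nonneg: "0 \<le> robustness n Ofr \<Phi>"
  unfolding robustness_def by (rule Inf_greatest) auto

lemma rob_below:
  assumes "robustness n Ofr \<Phi> < ereal l'"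
  shows "\<exists>l. 0 \<le> l \<and> l < l' \<and> (\<exists>\<Phi>'. in_conv n Ofr \<Phi>' \<and> in_conv n Ofr (mix n \<Phi> l \<Phi>'))"
  using assms unfolding robustness_def Inf_less_iff by auto

lemma lim_right:
  fixes x g R :: real
  assumes h: "\<forall>l'>g. x \<le> (1 + 2 * l') ^ k * R"
  shows "x \<le> (1 + 2 * g) ^ k * R"
proof (rule tendsto_lowerbound)
  show "((\<lambda>l'. (1 + 2 * l') ^ k * R) \<longlongrightarrow> (1 + 2 * g) ^ k * R) (at_right g)"
    by (intro tendsto_intros)
  show "\<forall>\<^sub>F l' in at_right g. x \<le> (1 + 2 * l') ^ k * R"
    using eventually_at_right_less[of g] by eventually_elim (use h in auto)
qed simp

lemma rep_of_adm:
  assumes c: "channel n \<Phi>" and l: "0 \<le> l" and i: "\<exists>\<Phi>'. in_conv n Ofr \<Phi>' \<and> in_conv n Ofr (mix n \<Phi> l \<Phi>')"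
  shows "rep n Ofr (1 + 2 * l) \<Phi>"
  using i rep_robust[OF _ l] channel_carrier[OF c] by blast

theorem mainTheorem3:
  fixes n k m :: nat
    and Ofr :: "(complex mat \<Rightarrow> complex mat) set"
    and \<Psi> :: "complex mat \<Rightarrow> complex mat"
    and D :: "(nat \<times> nat) pmf"
    and \<delta> :: real
  assumes O_nonempty: "Ofr \<noteq> {}"
    and O_channels: "\<forall>\<Phi> \<in> Ofr. channel n \<Phi>"
    and O_closed: "closed_under_comp Ofr"
    and Psi_channel: "channel n \<Psi>"
    and Psi_finite: "robustness n Ofr \<Psi> < \<infinity>"
    and D_support: "set_pmf D \<subseteq> {..<qdim n} \<times> {..<qdim n}"
    and delta: "0 < \<delta>" "\<delta> < 1"
    and m_pos: "m \<ge> 1"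
  shows "measure_pmf.prob (iid_sample D m)
           {S. \<forall>\<Phi> \<in> comps_k Ofr \<Psi> k.
                 er_D n D \<Phi> \<le> er_S n S \<Phi>
                   + 2 * real_of_ereal (gamma_star n Ofr \<Psi> k) * emp_rademacher (fclass n Ofr) S
                   + 3 * sqrt (ln (2 / \<delta>) / (2 * real m))}
         \<ge> 1 - \<delta>"
proof (cases "comps_k Ofr \<Psi> k = {}")
  case True
  then show ?thesis using delta by simp
next
  case False
  define C where "C = comps_k Ofr \<Psi> k"
  define GL where "GL = (\<lambda>\<Phi> z. loss n z \<Phi>) ` C"
  define F where "F = fclass n Ofr"
  define t where "t = sqrt (ln (2 / \<delta>) / (2 * real m))"
  define gs where "gs = real_of_ereal (gamma_star n Ofr \<Psi> k)"
  have mpos: "m > 0" using m_pos by simp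
  have fin: "finite (set_pmf D)" by (rule finite_subset[OF D_support]) simp
  have Cne: "C \<noteq> {}" using False C_def by simp
  have chC: "\<forall>\<Phi>\<in>C. channel n \<Phi>" using comps_channel[OF O_channels Psi_channel] C_def by blast
  have zD: "fst z < qdim n \<and> snd z < qdim n" if "z \<in> set_pmf D" for z using that D_support by auto
  have GLb: "\<forall>g\<in>GL. \<forall>z\<in>set_pmf D. 0 \<le> g z \<and> g z \<le> 1"
  proof (intro ballI)
    fix g z assume g: "g \<in> GL" and z: "z \<in> set_pmf D"
    obtain \<Phi> where \<Phi>: "\<Phi> \<in> C" "g = (\<lambda>z. loss n z \<Phi>)" using g GL_def by auto
    obtain x y where xy: "z = (x, y)" by (cases z)
    have "0 \<le> f_chan n \<Phi> (x, y) \<and> f_chan n \<Phi> (x, y) \<le> 1"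
      using f_chan_bounds[of n \<Phi> x y] chC \<Phi>(1) zD[OF z] xy by auto
    then show "0 \<le> g z \<and> g z \<le> 1" using \<Phi>(2) xy by (simp add: loss_def)
  qed
  have Fb: "\<forall>g\<in>F. \<forall>z\<in>set_pmf D. 0 \<le> g z \<and> g z \<le> 1"
  proof (intro ballI)
    fix g z assume g: "g \<in> F" and z: "z \<in> set_pmf D"
    obtain \<Phi> where \<Phi>: "\<Phi> \<in> Ofr" "g = f_chan n \<Phi>" using g F_def fclass_def by auto
    obtain x y where xy: "z = (x, y)" by (cases z)
    show "0 \<le> g z \<and> g z \<le> 1"
      using f_chan_bounds[of n \<Phi> x y] O_channels \<Phi> zD[OF z] xy by auto
  qed
  have GLne: "GL \<noteq> {}" using Cne GL_def by simp
  have Fne: "F \<noteq> {}" using O_nonempty F_def fclass_def by auto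
  have det: "radm m GL S \<le> gs * radm m F S" if S: "length S = m" "set S \<subseteq> set_pmf D" for S
  proof -
    define R where "R = radm m F S"
    define RL where "RL = radm m GL S"
    have R0: "0 \<le> R" unfolding R_def by (rule radm_nonneg[OF fin Fne Fb mpos S])
    have cb: "RL \<le> c * R" if rc: "\<forall>\<Phi>\<in>C. rep n Ofr c \<Phi>" for c
      unfolding RL_def R_def
    proof (rule rad_compare[OF fin Fne Fb mpos GLne _ S])
      show "\<forall>h\<in>GL. \<exists>L :: (real \<times> (nat \<times> nat \<Rightarrow> real)) list. set (map snd L) \<subseteq> F \<and> sum_list (map fst L) = 1 \<and>
        sum_list (map (\<lambda>p. \<bar>fst p\<bar>) L) \<le> c \<and> (\<forall>z\<in>set_pmf D. h z = 1 - sum_list (map (\<lambda>p. fst p * snd p z) L))"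
      proof
        fix h assume h: "h \<in> GL"
        obtain \<Phi> where \<Phi>: "\<Phi> \<in> C" "h = (\<lambda>z. loss n z \<Phi>)" using h GL_def by auto
        obtain L where L: "set (map snd L) \<subseteq> Ofr" "sum_list (map fst L) = 1" "sum_list (map (\<lambda>p. \<bar>fst p\<bar>) L) \<le> c"
          "\<forall>x<qdim n. \<forall>y<qdim n. f_chan n \<Phi> (x, y) = sum_list (map (\<lambda>p. fst p * f_chan n (snd p) (x, y)) L)"
          using rep_f[OF O_channels rc[rule_format, OF \<Phi>(1)]] by blast
        define L' where "L' = map (\<lambda>p. (fst p, f_chan n (snd p))) L"
        show "\<exists>L :: (real \<times> (nat \<times> nat \<Rightarrow> real)) list. set (map snd L) \<subseteq> F \<and> sum_list (map fst L) = 1 \<and>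
          sum_list (map (\<lambda>p. \<bar>fst p\<bar>) L) \<le> c \<and> (\<forall>z\<in>set_pmf D. h z = 1 - sum_list (map (\<lambda>p. fst p * snd p z) L))"
        proof (intro exI[of _ L'] conjI ballI)
          show "set (map snd L') \<subseteq> F" using L(1) by (auto simp: L'_def F_def fclass_def)
          show "sum_list (map fst L') = 1" using L(2) by (simp add: L'_def o_def)
          show "sum_list (map (\<lambda>p. \<bar>fst p\<bar>) L') \<le> c" using L(3) by (simp add: L'_def o_def)
          fix z assume z: "z \<in> set_pmf D"
          obtain x y where xy: "z = (x, y)" by (cases z)
          have "h z = 1 - f_chan n \<Phi> (x, y)" using \<Phi>(2) xy by (simp add: loss_def)
          also have "\<dots> = 1 - sum_list (map (\<lambda>p. fst p * f_chan n (snd p) (x, y)) L)" using L(4) zD[OF z] xy by simp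
          finally show "h z = 1 - sum_list (map (\<lambda>p. fst p * snd p z) L')" using xy by (simp add: L'_def o_def)
        qed
      qed
    qed
    obtain g0 where g0: "robustness n Ofr \<Psi> = ereal g0" "0 \<le> g0"
      using Psi_finite rob_nonneg[of n Ofr \<Psi>] by (cases "robustness n Ofr \<Psi>") auto
    have bb: "RL \<le> (1 + 2 * g0) ^ k * R"
    proof (rule lim_right, intro allI impI)
      fix l' assume l': "l' > g0"
      obtain l where l: "0 \<le> l" "l < l'" "\<exists>\<Phi>'. in_conv n Ofr \<Phi>' \<and> in_conv n Ofr (mix n \<Psi> l \<Phi>')"
        using rob_below[of n Ofr \<Psi> l'] g0 l' by auto
      have rP: "rep n Ofr (1 + 2 * l) \<Psi>" by (rule rep_of_adm[OF Psi_channel l(1) l(3)])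
      have "\<forall>\<Phi>\<in>C. rep n Ofr ((1 + 2 * l) ^ k) \<Phi>"
        using comps_rep[OF O_channels O_closed rP] l(1) C_def by auto
      then have "RL \<le> (1 + 2 * l) ^ k * R" by (rule cb)
      also have "\<dots> \<le> (1 + 2 * l') ^ k * R" using l R0 by (intro mult_right_mono power_mono) auto
      finally show "RL \<le> (1 + 2 * l') ^ k * R" .
    qed
    have gm_ge: "robustness n Ofr \<Psi> \<le> gamma_max n Ofr"
      unfolding gamma_max_def using Psi_channel by (intro Sup_upper) auto
    have ba: "RL \<le> (1 + 2 * gm) * R" if gm: "gamma_max n Ofr = ereal gm" for gm
    proof -
      have "RL \<le> (1 + 2 * gm) ^ 1 * R"
      proof (rule lim_right, intro allI impI)
        fix l' assume l': "l' > gm"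
        have "\<forall>\<Phi>\<in>C. rep n Ofr (1 + 2 * l') \<Phi>"
        proof
          fix \<Phi> assume \<Phi>: "\<Phi> \<in> C"
          have "robustness n Ofr \<Phi> \<le> gamma_max n Ofr"
            unfolding gamma_max_def using chC \<Phi> by (intro Sup_upper) auto
          moreover have "gamma_max n Ofr < ereal l'" using gm l' by simp
          ultimately have lt: "robustness n Ofr \<Phi> < ereal l'" by (rule order_le_less_trans)
          obtain l where l: "0 \<le> l" "l < l'" "\<exists>\<Phi>'. in_conv n Ofr \<Phi>' \<and> in_conv n Ofr (mix n \<Phi> l \<Phi>')"
            using rob_below[OF lt] by blast
          have "rep n Ofr (1 + 2 * l) \<Phi>" by (rule rep_of_adm[OF _ l(1) l(3)]) (use chC \<Phi> in auto)
          then show "rep n Ofr (1 + 2 * l') \<Phi>" by (rule rep_mono) (use l in auto)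
        qed
        then have "RL \<le> (1 + 2 * l') * R" by (rule cb)
        then show "RL \<le> (1 + 2 * l') ^ 1 * R" by simp
      qed
      then show ?thesis by simp
    qed
    have pw: "(1 + 2 * ereal g0) ^ k = ereal ((1 + 2 * g0) ^ k)"
    proof -
      have "1 + 2 * ereal g0 = ereal (1 + 2 * g0)" by simp
      then show ?thesis by (simp only: ereal_power)
    qed
    show ?thesis
    proof (cases "gamma_max n Ofr")
      case (real gm)
      have "gamma_star n Ofr \<Psi> k = min (1 + 2 * ereal gm) (ereal ((1 + 2 * g0) ^ k))"
        unfolding gamma_star_def real g0(1) pw by (rule refl)
      also have "1 + 2 * ereal gm = ereal (1 + 2 * gm)" by simp
      also have "min (ereal (1 + 2 * gm)) (ereal ((1 + 2 * g0) ^ k)) = ereal (min (1 + 2 * gm) ((1 + 2 * g0) ^ k))"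
        by (simp add: min_def)
      finally have "gs = min (1 + 2 * gm) ((1 + 2 * g0) ^ k)" by (simp add: gs_def min_def)
      then show ?thesis using ba[OF real] bb by (simp add: RL_def R_def min_def)
    next
      case PInf
      have "gamma_star n Ofr \<Psi> k = ereal ((1 + 2 * g0) ^ k)"
        unfolding gamma_star_def PInf g0(1) pw by simp
      then have "gs = (1 + 2 * g0) ^ k" by (simp add: gs_def)
      then show ?thesis using bb by (simp add: RL_def R_def)
    next
      case MInf
      then show ?thesis using gm_ge g0 by simp
    qed
  qed
  define Good where "Good = {S. \<forall>g\<in>GL. EE D g \<le> ehat m g S + 2 * radm m GL S + 3 * t}"
  have gen: "measure_pmf.prob (iid_sample D m) Good \<ge> 1 - \<delta>"
    unfolding Good_def t_def by (rule generic_bound[OF fin GLne GLb mpos delta])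
  define Target where "Target = {S. \<forall>\<Phi> \<in> comps_k Ofr \<Psi> k.
                 er_D n D \<Phi> \<le> er_S n S \<Phi>
                   + 2 * real_of_ereal (gamma_star n Ofr \<Psi> k) * emp_rademacher (fclass n Ofr) S
                   + 3 * sqrt (ln (2 / \<delta>) / (2 * real m))}"
  have sub: "Good \<inter> set_pmf (iid_sample D m) \<subseteq> Target"
  proof
    fix S assume S: "S \<in> Good \<inter> set_pmf (iid_sample D m)"
    then have Sl: "length S = m" "set S \<subseteq> set_pmf D" using iid_sample_set by blast+
    show "S \<in> Target" unfolding Target_def
    proof (intro CollectI ballI)
      fix \<Phi> assume \<Phi>: "\<Phi> \<in> comps_k Ofr \<Psi> k"
      have g: "(\<lambda>z. loss n z \<Phi>) \<in> GL" using \<Phi> by (simp add: GL_def C_def)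
      have "EE D (\<lambda>z. loss n z \<Phi>) \<le> ehat m (\<lambda>z. loss n z \<Phi>) S + 2 * radm m GL S + 3 * t"
        using S g unfolding Good_def by blast
      moreover have "er_D n D \<Phi> = EE D (\<lambda>z. loss n z \<Phi>)" by (simp add: er_D_def)
      moreover have "er_S n S \<Phi> = ehat m (\<lambda>z. loss n z \<Phi>) S" using Sl by (simp add: er_S_def ehat_def)
      moreover have "radm m GL S \<le> gs * emp_rademacher (fclass n Ofr) S"
        using det[OF Sl] radm_eq[OF Sl(1)] by (simp add: F_def)
      ultimately show "er_D n D \<Phi> \<le> er_S n S \<Phi>
                   + 2 * real_of_ereal (gamma_star n Ofr \<Psi> k) * emp_rademacher (fclass n Ofr) S
                   + 3 * sqrt (ln (2 / \<delta>) / (2 * real m))"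
        unfolding gs_def t_def by linarith
    qed
  qed
  have "measure_pmf.prob (iid_sample D m) Good = measure_pmf.prob (iid_sample D m) (Good \<inter> set_pmf (iid_sample D m))"
    by (simp add: measure_Int_set_pmf)
  also have "\<dots> \<le> measure_pmf.prob (iid_sample D m) Target"
    by (rule measure_pmf.finite_measure_mono[OF sub]) simp
  finally show ?thesis using gen unfolding Target_def by linarith
qed


end
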